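(* Let $\mathbb{K}\in\{\mathbb{R},\mathbb{C}\}$ and let $\mathcal{X}$ be a separable topological $\mathbb{K}$-vector space whose topological dual $\mathcal{X}^{\ast}$ separates the points of $\mathcal{X}$ and which is a Gateaux-differentiability space. Then for every $0$-neighborhood $\mathcal{U}$ in $\mathcal{X}$, the set $\mathcal{D}_{\mathcal{U}}$ is a $G_\delta$ subset of $\mathbf{CU}_{\mathcal{U}}(\mathcal{X}^{\ast})$ endowed with the weak*-Hausdorff hypertopology.
   Context: Topological vector spaces are Hausdorff; $\mathcal{X}^{\ast}$ carries the weak* topology. $\mathcal{X}$ is a Gateaux-differentiability space if every continuous convex real-valued function whose domain is a nonempty open convex subset of $\mathcal{X}$ is Gateaux-differentiable on a dense subset of that domain. $\mathcal{U}^{\circ}=\{\sigma\in\mathcal{X}^{\ast}:|\sigma(A)|\le1\ \forall A\in\mathcal{U}\}$; $\mathbf{CU}_{\mathcal{U}}(\mathcal{X}^{\ast})$ is the set of nonempty convex weak*-closed subsets of $\mathcal{U}^{\circ}$; $\mathcal{D}_{\mathcal{U}}=\{U\in\mathbf{CU}_{\mathcal{U}}(\mathcal{X}^{\ast}):U=\overline{\mathcal{E}(U)}\}$, where $\mathcal{E}(U)$ is the set of extreme points of $U$ and the closure is weak*. The weak*-Hausdorff hypertopology is generated by the extended pseudometrics $d_H^{(A)}(F,\tilde F)=\max\{\sup_{\sigma\in F}\inf_{\tilde\sigma\in\tilde F}|(\sigma-\tilde\sigma)(A)|,\ \sup_{\tilde\sigma\in\tilde F}\inf_{\sigma\in F}|(\sigma-\tilde\sigma)(A)|\}$,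 $A\in\mathcal{X}$. *)

theory Defs
  imports "HOL-Analysis.Analysis"
begin

definition tvs :: "('k::real_normed_field \<Rightarrow> 'a::ab_group_add \<Rightarrow> 'a) \<Rightarrow> 'a topology \<Rightarrow> bool" where
  "tvs smul T \<longleftrightarrow> vector_space smul \<and> topspace T = UNIV \<and> Hausdorff_space T \<and>
     continuous_map (prod_topology T T) T (\<lambda>(x, y). x + y) \<and>
     continuous_map (prod_topology euclidean T) T (\<lambda>(c, x). smul c x)"

definition dual :: "('k::real_normed_field \<Rightarrow> 'a::ab_group_add \<Rightarrow> 'a) \<Rightarrow> 'a topology \<Rightarrow> ('a \<Rightarrow> 'k) set" where
  "dual smul T = {\<sigma>. Vector_Spaces.linear smul (*) \<sigma> \<and> continuous_map T euclidean \<sigma>}"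

definition weakstar :: "('k::real_normed_field \<Rightarrow> 'a::ab_group_add \<Rightarrow> 'a) \<Rightarrow> 'a topology \<Rightarrow> ('a \<Rightarrow> 'k) topology" where
  "weakstar smul T = subtopology (product_topology (\<lambda>_. euclidean) UNIV) (dual smul T)"

definition dual_separates_points :: "('k::real_normed_field \<Rightarrow> 'a::ab_group_add \<Rightarrow> 'a) \<Rightarrow> 'a topology \<Rightarrow> bool" where
  "dual_separates_points smul T \<longleftrightarrow> (\<forall>x y. x \<noteq> y \<longrightarrow> (\<exists>\<sigma>\<in>dual smul T. \<sigma> x \<noteq> \<sigma> y))"

definition convex_set_tvs :: "('k::real_normed_field \<Rightarrow> 'a::ab_group_add \<Rightarrow> 'a) \<Rightarrow> 'a set \<Rightarrow> bool" where
  "convex_set_tvs smul S \<longleftrightarrow> (\<forall>x\<in>S. \<forall>y\<in>S. \<forall>t::real. 0 \<le> t \<and> t \<le> 1 \<longrightarrow>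
      smul (of_real t) x + smul (of_real (1 - t)) y \<in> S)"

definition convex_fun_tvs :: "('k::real_normed_field \<Rightarrow> 'a::ab_group_add \<Rightarrow> 'a) \<Rightarrow> 'a set \<Rightarrow> ('a \<Rightarrow> real) \<Rightarrow> bool" where
  "convex_fun_tvs smul S f \<longleftrightarrow> (\<forall>x\<in>S. \<forall>y\<in>S. \<forall>t::real. 0 \<le> t \<and> t \<le> 1 \<longrightarrow>
      f (smul (of_real t) x + smul (of_real (1 - t)) y) \<le> t * f x + (1 - t) * f y)"

definition gateaux_differentiable_at :: "('k::real_normed_field \<Rightarrow> 'a::ab_group_add \<Rightarrow> 'a) \<Rightarrow> 'a topology \<Rightarrow> ('a \<Rightarrow> real) \<Rightarrow> 'a \<Rightarrow> bool" where
  "gateaux_differentiable_at smul T f x \<longleftrightarrow>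
     (\<exists>g :: 'a \<Rightarrow> real.
        (\<forall>u v. g (u + v) = g u + g v) \<and> (\<forall>r::real. \<forall>u. g (smul (of_real r) u) = r * g u) \<and>
        continuous_map T euclidean g \<and>
        (\<forall>h. ((\<lambda>t::real. (f (x + smul (of_real t) h) - f x) / t) \<longlongrightarrow> g h) (at 0)))"

definition gateaux_differentiability_space :: "('k::real_normed_field \<Rightarrow> 'a::ab_group_add \<Rightarrow> 'a) \<Rightarrow> 'a topology \<Rightarrow> bool" where
  "gateaux_differentiability_space smul T \<longleftrightarrow>
     (\<forall>S (f :: 'a \<Rightarrow> real). S \<noteq> {} \<and> openin T S \<and> convex_set_tvs smul S \<and>
        convex_fun_tvs smul S f \<and> continuous_map (subtopology T S) euclidean f \<longrightarrow>
        (\<exists>D. D \<subseteq> S \<and> S \<subseteq> T closure_of D \<and> (\<forall>x\<in>D. gateaux_differentiable_at smul T f x)))"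

definition zero_nbhd :: "'a topology \<Rightarrow> 'a::ab_group_add set \<Rightarrow> bool" where
  "zero_nbhd T U \<longleftrightarrow> 0 \<in> T interior_of U"

definition polar :: "('k::real_normed_field \<Rightarrow> 'a::ab_group_add \<Rightarrow> 'a) \<Rightarrow> 'a topology \<Rightarrow> 'a set \<Rightarrow> ('a \<Rightarrow> 'k) set" where
  "polar smul T U = {\<sigma>\<in>dual smul T. \<forall>A\<in>U. norm (\<sigma> A) \<le> 1}"

definition dcomb :: "real \<Rightarrow> ('a \<Rightarrow> 'k::real_normed_field) \<Rightarrow> ('a \<Rightarrow> 'k) \<Rightarrow> ('a \<Rightarrow> 'k)" where
  "dcomb t \<sigma> \<tau> = (\<lambda>A. of_real t * \<sigma> A + of_real (1 - t) * \<tau> A)"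

definition convex_dual :: "('a \<Rightarrow> 'k::real_normed_field) set \<Rightarrow> bool" where
  "convex_dual F \<longleftrightarrow> (\<forall>\<sigma>\<in>F. \<forall>\<tau>\<in>F. \<forall>t::real. 0 \<le> t \<and> t \<le> 1 \<longrightarrow> dcomb t \<sigma> \<tau> \<in> F)"

definition extreme_points :: "('a \<Rightarrow> 'k::real_normed_field) set \<Rightarrow> ('a \<Rightarrow> 'k) set" where
  "extreme_points F = {\<sigma>\<in>F. \<forall>\<tau>\<in>F. \<forall>\<rho>\<in>F. \<forall>t::real. 0 < t \<and> t < 1 \<and> \<sigma> = dcomb t \<tau> \<rho> \<longrightarrow> \<tau> = \<rho>}"

definition CU :: "('k::real_normed_field \<Rightarrow> 'a::ab_group_add \<Rightarrow> 'a) \<Rightarrow> 'a topology \<Rightarrow> 'a set \<Rightarrow> ('a \<Rightarrow> 'k) set set" where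
  "CU smul T U = {F. F \<noteq> {} \<and> F \<subseteq> polar smul T U \<and> convex_dual F \<and> closedin (weakstar smul T) F}"

definition DU :: "('k::real_normed_field \<Rightarrow> 'a::ab_group_add \<Rightarrow> 'a) \<Rightarrow> 'a topology \<Rightarrow> 'a set \<Rightarrow> ('a \<Rightarrow> 'k) set set" where
  "DU smul T U = {F\<in>CU smul T U. F = weakstar smul T closure_of (extreme_points F)}"

definition dH :: "'a \<Rightarrow> ('a \<Rightarrow> 'k::real_normed_field) set \<Rightarrow> ('a \<Rightarrow> 'k) set \<Rightarrow> ereal" where
  "dH A F G = max (SUP \<sigma>\<in>F. INF \<tau>\<in>G. ereal (norm (\<sigma> A - \<tau> A)))
                  (SUP \<tau>\<in>G. INF \<sigma>\<in>F. ereal (norm (\<sigma> A - \<tau> A)))"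

definition weakstar_hausdorff_hypertopology :: "('a \<Rightarrow> 'k::real_normed_field) set topology" where
  "weakstar_hausdorff_hypertopology = topology (\<lambda>W. \<forall>F\<in>W. \<exists>As e. finite As \<and> e > 0 \<and>
      (\<forall>G. (\<forall>A\<in>As. dH A F G < ereal e) \<longrightarrow> G \<in> W))"

end

theory Submission imports Defs begin

lemma weakstar_eq: "weakstar smul T = top_of_set (dual smul T)"
  unfolding weakstar_def euclidean_product_topology ..

lemma vs_mult: "vector_space ((*) :: 'k::field \<Rightarrow> 'k \<Rightarrow> 'k)"
  unfolding vector_space_def module_def by (auto simp: algebra_simps)

locale wsetting =
  fixes smul :: "'k::{real_normed_field,heine_borel} \<Rightarrow> 'a::ab_group_add \<Rightarrow> 'a" and T :: "'a topology" and U :: "'a set"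
    and re :: "'k \<Rightarrow> real" and J :: "'k set"
  assumes tvs: "tvs smul T" and sepT: "separable_space T" and U0: "zero_nbhd T U"
    and re_lin: "bounded_linear re" and re_le: "\<And>z. \<bar>re z\<bar> \<le> norm z"
    and J_fin: "finite J" and J_norm: "\<And>z. norm z \<le> (\<Sum>c\<in>J. \<bar>re (c * z)\<bar>)"
begin

abbreviation "Dl \<equiv> dual smul T"
abbreviation "P \<equiv> polar smul T U"

definition ell :: "'a \<Rightarrow> ('a \<Rightarrow> 'k) \<Rightarrow> real" where "ell w \<sigma> = re (\<sigma> w)"

lemma vs: "vector_space smul" using tvs unfolding tvs_def by auto
lemma topT: "topspace T = UNIV" using tvs unfolding tvs_def by auto
lemma cont_add: "continuous_map (prod_topology T T) T (\<lambda>(x, y). x + y)" using tvs unfolding tvs_def by auto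
lemma cont_smul: "continuous_map (prod_topology euclidean T) T (\<lambda>(c, x). smul c x)" using tvs unfolding tvs_def by auto

interpretation V: vector_space smul by (rule vs)

lemma dual_add: "\<sigma> \<in> Dl \<Longrightarrow> \<sigma> (x + y) = \<sigma> x + \<sigma> y"
  unfolding dual_def by (auto simp: Vector_Spaces.linear_iff)
lemma dual_smul: "\<sigma> \<in> Dl \<Longrightarrow> \<sigma> (smul c x) = c * \<sigma> x"
  unfolding dual_def by (auto simp: Vector_Spaces.linear_iff)
lemma dual_0: "\<sigma> \<in> Dl \<Longrightarrow> \<sigma> 0 = 0"
  using dual_add[of \<sigma> 0 0] by simp
lemma dual_neg: "\<sigma> \<in> Dl \<Longrightarrow> \<sigma> (- x) = - \<sigma> x"
  using dual_add[of \<sigma> x "-x"] dual_0[of \<sigma>] by (simp add: eq_neg_iff_add_eq_0 add.commute)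
lemma dual_diff: "\<sigma> \<in> Dl \<Longrightarrow> \<sigma> (x - y) = \<sigma> x - \<sigma> y"
  using dual_add[of \<sigma> x "-y"] dual_neg[of \<sigma> y] by simp
lemma dual_sum: "\<sigma> \<in> Dl \<Longrightarrow> \<sigma> (sum f S) = (\<Sum>i\<in>S. \<sigma> (f i))"
  by (induction S rule: infinite_finite_induct) (auto simp: dual_0 dual_add)

lemma re_add: "re (x + y) = re x + re y" using re_lin by (simp add: bounded_linear.axioms(1) linear_add)
lemma re_scale: "re (of_real r * x) = r * re x"
proof -
  have "re (of_real r * x) = re (r *\<^sub>R x)" by (simp add: scaleR_conv_of_real)
  also have "\<dots> = r *\<^sub>R re x" using re_lin by (simp add: bounded_linear.linear linear_scale)
  finally show ?thesis by simp
qed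
lemma re_0: "re 0 = 0" using re_add[of 0 0] by simp
lemma re_neg: "re (- x) = - re x" using re_add[of x "-x"] re_0 by (simp add: eq_neg_iff_add_eq_0)
lemma re_diff: "re (x - y) = re x - re y" using re_add[of x "-y"] re_neg[of y] by simp
lemma re_sum: "re (sum f S) = (\<Sum>i\<in>S. re (f i))"
  by (induction S rule: infinite_finite_induct) (auto simp: re_0 re_add)
lemma re_cont: "continuous_on S re"
  using re_lin by (simp add: linear_continuous_on)

lemma ell_dcomb: "ell w (dcomb t \<sigma> \<rho>) = t * ell w \<sigma> + (1 - t) * ell w \<rho>"
  unfolding ell_def dcomb_def by (simp only: re_add re_scale)
lemma ell_add: "\<sigma> \<in> Dl \<Longrightarrow> ell (x + y) \<sigma> = ell x \<sigma> + ell y \<sigma>"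
  unfolding ell_def by (simp add: dual_add re_add)
lemma ell_neg: "\<sigma> \<in> Dl \<Longrightarrow> ell (- x) \<sigma> = - ell x \<sigma>"
  unfolding ell_def by (simp add: dual_neg re_neg)
lemma ell_0: "\<sigma> \<in> Dl \<Longrightarrow> ell 0 \<sigma> = 0"
  unfolding ell_def by (simp add: dual_0 re_0)
lemma ell_scale: "\<sigma> \<in> Dl \<Longrightarrow> ell (smul (of_real r) x) \<sigma> = r * ell x \<sigma>"
  unfolding ell_def by (simp add: dual_smul re_scale)
lemma ell_sum: "\<sigma> \<in> Dl \<Longrightarrow> ell (sum f S) \<sigma> = (\<Sum>i\<in>S. ell (f i) \<sigma>)"
  unfolding ell_def by (simp add: dual_sum re_sum)
lemma ell_cont: "continuous_on S (ell w)"
  unfolding ell_def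
  by (rule continuous_on_compose2[OF re_cont continuous_on_subset[OF continuous_on_product_coordinates]]) auto
lemma ell_diff_le: "\<bar>ell w \<sigma> - ell w \<tau>\<bar> \<le> norm (\<sigma> w - \<tau> w)"
  unfolding ell_def using re_le[of "\<sigma> w - \<tau> w"] by (simp add: re_diff)

lemma dual_ne_ell: assumes "\<sigma> \<in> Dl" "\<tau> \<in> Dl" "\<sigma> \<noteq> \<tau>" shows "\<exists>w. ell w \<sigma> \<noteq> ell w \<tau>"
proof -
  obtain x where x: "\<sigma> x \<noteq> \<tau> x" using assms(3) by auto
  have "0 < norm (\<sigma> x - \<tau> x)" using x by simp
  also have "\<dots> \<le> (\<Sum>c\<in>J. \<bar>re (c * (\<sigma> x - \<tau> x))\<bar>)" by (rule J_norm)
  finally have pos: "0 < (\<Sum>c\<in>J. \<bar>re (c * (\<sigma> x - \<tau> x))\<bar>)" .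
  have "\<exists>c\<in>J. re (c * (\<sigma> x - \<tau> x)) \<noteq> 0"
  proof (rule ccontr)
    assume "\<not> ?thesis"
    then have "(\<Sum>c\<in>J. \<bar>re (c * (\<sigma> x - \<tau> x))\<bar>) = 0" by simp
    then show False using pos by simp
  qed
  then obtain c where "re (c * (\<sigma> x - \<tau> x)) \<noteq> 0" by blast
  moreover have "ell (smul c x) \<sigma> - ell (smul c x) \<tau> = re (c * (\<sigma> x - \<tau> x))"
  proof -
    have "ell (smul c x) \<sigma> - ell (smul c x) \<tau> = re (c * \<sigma> x) - re (c * \<tau> x)"
      unfolding ell_def using assms by (simp add: dual_smul)
    also have "\<dots> = re (c * \<sigma> x - c * \<tau> x)" by (simp only: re_diff)
    finally show ?thesis by (simp only: right_diff_distrib)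
  qed
  ultimately have "ell (smul c x) \<sigma> \<noteq> ell (smul c x) \<tau>" by auto
  then show ?thesis by blast
qed


lemma cont_add_const: "continuous_map T T (\<lambda>x. x + a)"
proof -
  have "continuous_map T (prod_topology T T) (\<lambda>x. (x, a))"
    by (intro continuous_map_pairedI continuous_map_id continuous_map_const[THEN iffD2]) (simp_all add: topT)
  from continuous_map_compose[OF this cont_add] show ?thesis by (simp add: o_def)
qed

lemma cont_smul_const: "continuous_map T T (\<lambda>x. smul c x)"
proof -
  have "continuous_map T (prod_topology euclidean T) (\<lambda>x. (c, x))"
    by (intro continuous_map_pairedI continuous_map_id continuous_map_const[THEN iffD2]) simp_all
  from continuous_map_compose[OF this cont_smul] show ?thesis by (simp add: o_def)
qed

lemma cont_smul_t: "continuous_map euclidean T (\<lambda>t. smul t x)"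
proof -
  have "continuous_map euclidean (prod_topology euclidean T) (\<lambda>t. (t, x))"
    by (intro continuous_map_pairedI continuous_map_id continuous_map_const[THEN iffD2]) (simp_all add: topT)
  from continuous_map_compose[OF this cont_smul] show ?thesis by (simp add: o_def)
qed

lemma cont_affine: "continuous_map T T (\<lambda>x. smul c (x + a))"
  using continuous_map_compose[OF cont_add_const cont_smul_const] by (simp add: o_def)

abbreviation "IU \<equiv> T interior_of U"

lemma IU_open: "openin T IU" by simp
lemma IU_0: "0 \<in> IU" using U0 unfolding zero_nbhd_def .
lemma IU_sub: "IU \<subseteq> U" by (rule interior_of_subset)

lemma open_pre: "openin T {x. smul c (x + a) \<in> IU}"
  using openin_continuous_map_preimage[OF cont_affine IU_open] by (simp add: topT)

lemma absorb: "\<exists>\<delta>>0. \<forall>t. norm t < \<delta> \<longrightarrow> smul t x \<in> IU"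
proof -
  have "openin euclidean {t. smul t x \<in> IU}"
    using openin_continuous_map_preimage[OF cont_smul_t IU_open] by simp
  then have "open {t. smul t x \<in> IU}" by simp
  moreover have "0 \<in> {t. smul t x \<in> IU}" using IU_0 by simp
  ultimately obtain \<delta> where "\<delta> > 0" "ball 0 \<delta> \<subseteq> {t. smul t x \<in> IU}"
    by (meson open_contains_ball)
  moreover have "norm t < \<delta> \<Longrightarrow> t \<in> ball 0 \<delta>" for t by (simp add: dist_norm)
  ultimately show ?thesis by blast
qed

lemma P_sub: "P \<subseteq> Dl" unfolding polar_def by auto

lemma polar_small: assumes "\<sigma> \<in> P" "\<epsilon> > 0" "smul (of_real (1/\<epsilon>)) z \<in> U"
  shows "norm (\<sigma> z) \<le> \<epsilon>"
proof -
  have "\<sigma> \<in> Dl" using assms P_sub by auto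
  have "norm (\<sigma> (smul (of_real (1/\<epsilon>)) z)) \<le> 1" using assms unfolding polar_def by auto
  then have "norm (of_real (1/\<epsilon>) * \<sigma> z) \<le> 1" using \<open>\<sigma> \<in> Dl\<close> by (simp only: dual_smul)
  then have "(1/\<epsilon>) * norm (\<sigma> z) \<le> 1" using assms(2) by (simp only: norm_mult norm_of_real) simp
  then show ?thesis using assms(2) by (simp add: field_simps)
qed

lemma polar_bound: "\<exists>R. \<forall>\<sigma>\<in>P. norm (\<sigma> x) \<le> R"
proof -
  obtain \<delta> where d: "\<delta> > 0" "\<And>t. norm t < \<delta> \<Longrightarrow> smul t x \<in> IU" using absorb by blast
  have "smul (of_real (1/(2/\<delta>))) x \<in> U"
    using d(2)[of "of_real (\<delta>/2)"] d(1) IU_sub by auto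
  then have "\<forall>\<sigma>\<in>P. norm (\<sigma> x) \<le> 2/\<delta>" using polar_small d(1) by auto
  then show ?thesis by blast
qed

definition "Plin = {\<sigma>. (\<forall>x y. \<sigma> (x + y) = \<sigma> x + \<sigma> y) \<and> (\<forall>c x. \<sigma> (smul c x) = c * \<sigma> x) \<and> (\<forall>A\<in>U. norm (\<sigma> A) \<le> 1)}"

lemma Plin_cont: assumes "\<sigma> \<in> Plin" shows "continuous_map T euclidean \<sigma>"
proof -
  have add: "\<sigma> (x + y) = \<sigma> x + \<sigma> y" for x y using assms unfolding Plin_def by auto
  have sm: "\<sigma> (smul c x) = c * \<sigma> x" for c x using assms unfolding Plin_def by auto
  have bd: "norm (\<sigma> A) \<le> 1" if "A \<in> U" for A using assms that unfolding Plin_def by auto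
  have neg: "\<sigma> (- x) = - \<sigma> x" for x
    using add[of x "-x"] add[of 0 0] by (simp add: eq_neg_iff_add_eq_0 add.commute)
  have "openin T {x. \<sigma> x \<in> V}" if "open V" for V
  proof (subst openin_subopen, intro ballI)
    fix x0 assume "x0 \<in> {x. \<sigma> x \<in> V}"
    then obtain \<epsilon> where e: "\<epsilon> > 0" "ball (\<sigma> x0) \<epsilon> \<subseteq> V" using \<open>open V\<close> open_contains_ball by blast
    let ?N = "{x. smul (of_real (2/\<epsilon>)) (x + - x0) \<in> IU}"
    have "openin T ?N" by (rule open_pre)
    moreover have "x0 \<in> ?N" using IU_0 by simp
    moreover have "?N \<subseteq> {x. \<sigma> x \<in> V}"
    proof
      fix x assume "x \<in> ?N"
      then have "norm (\<sigma> (smul (of_real (2/\<epsilon>)) (x + - x0))) \<le> 1" using bd IU_sub by auto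
      then have "norm (of_real (2/\<epsilon>) * (\<sigma> x + - \<sigma> x0)) \<le> 1" by (simp only: sm add neg)
      then have "\<bar>2/\<epsilon>\<bar> * norm (\<sigma> x - \<sigma> x0) \<le> 1" by (simp only: norm_mult norm_of_real) simp
      then have "(2/\<epsilon>) * norm (\<sigma> x - \<sigma> x0) \<le> 1" using e(1) by simp
      then have "norm (\<sigma> x - \<sigma> x0) < \<epsilon>" using e(1) by (simp add: field_simps)
      then have "\<sigma> x \<in> ball (\<sigma> x0) \<epsilon>" by (simp add: dist_norm norm_minus_commute)
      then show "x \<in> {x. \<sigma> x \<in> V}" using e(2) by auto
    qed
    ultimately show "\<exists>T'. openin T T' \<and> x0 \<in> T' \<and> T' \<subseteq> {x. \<sigma> x \<in> V}" by blast
  qed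
  then show ?thesis unfolding continuous_map_def by (simp add: topT)
qed

lemma P_eq: "P = Plin"
proof
  show "P \<subseteq> Plin" unfolding polar_def Plin_def dual_def by (auto simp: Vector_Spaces.linear_iff)
  show "Plin \<subseteq> P"
  proof
    fix \<sigma> assume s: "\<sigma> \<in> Plin"
    then have "Vector_Spaces.linear smul (*) \<sigma>" using vs vs_mult unfolding Plin_def
      by (auto simp: Vector_Spaces.linear_iff)
    then show "\<sigma> \<in> P" using Plin_cont[OF s] s unfolding polar_def dual_def Plin_def by auto
  qed
qed

lemma coord_cont: "continuous_on UNIV (\<lambda>\<sigma>::'a\<Rightarrow>'k. \<sigma> x)" by simp

lemma closed_P: "closed P"
proof -
  have c1: "closed {\<sigma>::'a\<Rightarrow>'k. \<forall>x y. \<sigma> (x + y) = \<sigma> x + \<sigma> y}"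
    by (intro closed_Collect_all closed_Collect_eq continuous_intros) simp_all
  have c2: "closed {\<sigma>::'a\<Rightarrow>'k. \<forall>c x. \<sigma> (smul c x) = c * \<sigma> x}"
    by (intro closed_Collect_all closed_Collect_eq continuous_intros) simp_all
  have c3: "closed {\<sigma>::'a\<Rightarrow>'k. \<forall>A. A \<in> U \<longrightarrow> norm (\<sigma> A) \<le> 1}"
  proof (intro closed_Collect_all)
    fix A show "closed {\<sigma>::'a\<Rightarrow>'k. A \<in> U \<longrightarrow> norm (\<sigma> A) \<le> 1}"
    proof (cases "A \<in> U")
      case True
      then show ?thesis by (simp, intro closed_Collect_le continuous_intros) simp_all
    qed simp
  qed
  have "P = {\<sigma>::'a\<Rightarrow>'k. \<forall>x y. \<sigma> (x + y) = \<sigma> x + \<sigma> y} \<inter> {\<sigma>. \<forall>c x. \<sigma> (smul c x) = c * \<sigma> x}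
     \<inter> {\<sigma>. \<forall>A. A \<in> U \<longrightarrow> norm (\<sigma> A) \<le> 1}"
    unfolding P_eq Plin_def by auto
  then show ?thesis using c1 c2 c3 by (simp add: closed_Int)
qed

lemma compact_P: "compact P"
proof -
  define R where "R x = (SOME R. \<forall>\<sigma>\<in>P. norm (\<sigma> x) \<le> R)" for x
  have R: "\<forall>\<sigma>\<in>P. norm (\<sigma> x) \<le> R x" for x
    unfolding R_def using polar_bound[of x] by (rule someI_ex)
  have "compactin (product_topology (\<lambda>_. euclidean) UNIV) (PiE UNIV (\<lambda>x. cball (0::'k) (R x)))"
    by (subst compactin_PiE) auto
  then have cp: "compact (PiE UNIV (\<lambda>x. cball (0::'k) (R x)))"
    by (simp add: euclidean_product_topology)
  have "P \<subseteq> PiE UNIV (\<lambda>x. cball (0::'k) (R x))" using R by auto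
  then have "P = PiE UNIV (\<lambda>x. cball (0::'k) (R x)) \<inter> P" by blast
  then show ?thesis using compact_Int_closed[OF cp closed_P] by simp
qed


lemma CU_props: assumes "F \<in> CU smul T U"
  shows "F \<noteq> {}" "F \<subseteq> P" "convex_dual F" "closed F" "compact F"
proof -
  show "F \<noteq> {}" "F \<subseteq> P" "convex_dual F" using assms unfolding CU_def by auto
  have "closedin (top_of_set Dl) F" using assms unfolding CU_def weakstar_eq by auto
  then obtain C where C: "closed C" "F = Dl \<inter> C" by (auto simp: closedin_closed)
  have "F = P \<inter> C" using C \<open>F \<subseteq> P\<close> P_sub by auto
  then show "closed F" using C closed_P by (simp add: closed_Int)
  then show "compact F" using \<open>F = P \<inter> C\<close> compact_Int_closed[OF compact_P C(1)] by simp
qed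

lemma dcomb_1[simp]: "dcomb 1 \<sigma> \<rho> = \<sigma>" unfolding dcomb_def by simp
lemma dcomb_0[simp]: "dcomb 0 \<sigma> \<rho> = \<rho>" unfolding dcomb_def by simp
lemma dcomb_same[simp]: "dcomb t \<sigma> \<sigma> = \<sigma>"
  unfolding dcomb_def by (rule ext) (simp add: ring_distribs(2)[symmetric])

lemma conv_le: "0 \<le> (t::real) \<Longrightarrow> t \<le> 1 \<Longrightarrow> x \<le> a \<Longrightarrow> y \<le> a \<Longrightarrow> t * x + (1 - t) * y \<le> a"
proof -
  assume "0 \<le> t" "t \<le> 1" "x \<le> a" "y \<le> a"
  then have "t * x \<le> t * a" "(1 - t) * y \<le> (1 - t) * a" by (simp_all add: mult_left_mono)
  then show ?thesis by (simp add: algebra_simps)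
qed

lemma conv_eq_max: "0 < (t::real) \<Longrightarrow> t < 1 \<Longrightarrow> x \<le> a \<Longrightarrow> y \<le> a \<Longrightarrow> t * x + (1 - t) * y = a \<Longrightarrow> x = a \<and> y = a"
proof -
  assume h: "0 < t" "t < 1" "x \<le> a" "y \<le> a" "t * x + (1 - t) * y = a"
  have "t * x \<le> t * a" "(1 - t) * y \<le> (1 - t) * a" using h by (simp_all add: mult_left_mono)
  moreover have "t * x + (1 - t) * y = t * a + (1 - t) * a" using h by (simp add: algebra_simps)
  ultimately have "t * x = t * a" "(1 - t) * y = (1 - t) * a" by linarith+
  then show ?thesis using h by simp
qed

lemma cvx_cap_le: "convex_dual F \<Longrightarrow> convex_dual {\<sigma>\<in>F. ell w \<sigma> \<le> a}"
  unfolding convex_dual_def by (auto simp: ell_dcomb intro!: conv_le)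

lemma cvx_cap_ge: "convex_dual F \<Longrightarrow> convex_dual {\<sigma>\<in>F. a \<le> ell w \<sigma>}"
proof -
  assume "convex_dual F"
  moreover have "a \<le> t * x + (1 - t) * y" if "0 \<le> t" "t \<le> 1" "a \<le> x" "a \<le> y" for t x y
    using conv_le[of t "-x" "-a" "-y"] that by (simp add: algebra_simps)
  ultimately show ?thesis unfolding convex_dual_def by (auto simp: ell_dcomb)
qed

lemma closed_ell_le: "closed {\<sigma>. ell w \<sigma> \<le> a}"
  by (intro closed_Collect_le ell_cont continuous_intros)
lemma closed_ell_ge: "closed {\<sigma>. a \<le> ell w \<sigma>}"
  by (intro closed_Collect_le ell_cont continuous_intros)
lemma closed_ell_eq: "closed {\<sigma>. ell w \<sigma> = a}"
  by (intro closed_Collect_eq ell_cont continuous_intros)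
lemma open_ell_gt: "open {\<sigma>. a < ell w \<sigma>}"
  by (intro open_Collect_less ell_cont continuous_intros)

definition face :: "('a \<Rightarrow> 'k) set \<Rightarrow> ('a \<Rightarrow> 'k) set \<Rightarrow> bool" where
  "face G F \<longleftrightarrow> G \<subseteq> F \<and> (\<forall>\<tau>\<in>F. \<forall>\<rho>\<in>F. \<forall>t. 0 < t \<and> t < 1 \<and> dcomb t \<tau> \<rho> \<in> G \<longrightarrow> \<tau> \<in> G \<and> \<rho> \<in> G)"

lemma compact_closed_fun: assumes "compact (S :: ('a \<Rightarrow> 'k) set)" shows "closed S"
proof -
  have H: "Hausdorff_space (product_topology (\<lambda>_::'a. (euclidean :: 'k topology)) UNIV)"
    by (simp add: Hausdorff_space_product_topology)
  have "compactin (product_topology (\<lambda>_::'a. (euclidean :: 'k topology)) UNIV) S"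
    using assms by (simp add: euclidean_product_topology)
  from compactin_imp_closedin[OF H this] show ?thesis by (simp add: euclidean_product_topology)
qed

lemma face_self: "face F F" unfolding face_def by auto

lemma argmax_face:
  assumes "compact F" "F \<noteq> {}"
  obtains m where "{\<sigma>\<in>F. ell w \<sigma> = m} \<noteq> {}" "closed {\<sigma>\<in>F. ell w \<sigma> = m}"
    "face {\<sigma>\<in>F. ell w \<sigma> = m} F" "\<forall>\<sigma>\<in>F. ell w \<sigma> \<le> m"
proof -
  obtain s where s: "s \<in> F" "\<forall>y\<in>F. ell w y \<le> ell w s"
    using continuous_attains_sup[OF assms ell_cont] by blast
  let ?m = "ell w s"
  have "{\<sigma>\<in>F. ell w \<sigma> = ?m} \<noteq> {}" using s by auto
  moreover have "closed {\<sigma>\<in>F. ell w \<sigma> = ?m}"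
    using closed_Int[OF compact_closed_fun[OF assms(1)] closed_ell_eq[of w ?m]]
    by (simp add: Collect_conj_eq)
  moreover have "face {\<sigma>\<in>F. ell w \<sigma> = ?m} F"
    unfolding face_def
  proof (intro conjI ballI allI impI)
    show "{\<sigma>\<in>F. ell w \<sigma> = ?m} \<subseteq> F" by auto
    fix \<tau> \<rho> t assume h: "\<tau>\<in>F" "\<rho>\<in>F" "0<t \<and> t<1 \<and> dcomb t \<tau> \<rho> \<in> {\<sigma>\<in>F. ell w \<sigma> = ?m}"
    then have "t * ell w \<tau> + (1-t) * ell w \<rho> = ?m" by (simp add: ell_dcomb)
    then have "ell w \<tau> = ?m \<and> ell w \<rho> = ?m" using conv_eq_max[of t "ell w \<tau>" ?m "ell w \<rho>"] h s by auto
    then show "\<tau> \<in> {\<sigma>\<in>F. ell w \<sigma> = ?m}" "\<rho> \<in> {\<sigma>\<in>F. ell w \<sigma> = ?m}" using h by auto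
  qed
  ultimately show ?thesis using that s by blast
qed

lemma finite_chain_Inter:
  assumes "finite C" "C \<noteq> {}" "\<forall>x\<in>C. \<forall>y\<in>C. x \<subseteq> y \<or> y \<subseteq> x"
  shows "\<Inter>C \<in> C"
  using assms
proof (induction C rule: finite_ne_induct)
  case (singleton x) then show ?case by simp
next
  case (insert x F)
  then have "\<Inter>F \<in> F" by auto
  then have "x \<subseteq> \<Inter>F \<or> \<Inter>F \<subseteq> x" using insert.prems by auto
  then show ?case using \<open>\<Inter>F \<in> F\<close> by (auto simp: Int_absorb2 Int_absorb1)
qed

lemma exists_extreme:
  assumes F: "compact F" "F \<subseteq> Dl" and G0: "closed G0" "G0 \<noteq> {}" "face G0 F"
  shows "\<exists>e\<in>G0. e \<in> extreme_points F"
proof -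
  define A where "A = {G. G \<subseteq> G0 \<and> G \<noteq> {} \<and> closed G \<and> face G F}"
  have G0A: "G0 \<in> A" using G0 unfolding A_def by auto
  have "\<exists>M\<in>uminus ` A. \<forall>X\<in>uminus ` A. M \<subseteq> X \<longrightarrow> X = M"
  proof (rule subset_Zorn_nonempty)
    show "uminus ` A \<noteq> {}" using G0A by auto
  next
    fix C assume C: "C \<noteq> {}" "subset.chain (uminus ` A) C"
    define Gs where "Gs = uminus ` C"
    have GsA: "Gs \<subseteq> A" using C(2) unfolding Gs_def subset.chain_def by auto
    have Gs_ne: "Gs \<noteq> {}" using C(1) unfolding Gs_def by auto
    have ch: "\<forall>a\<in>C. \<forall>b\<in>C. a \<subseteq> b \<or> b \<subseteq> a" using C(2) unfolding subset.chain_def by blast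
    have Gs_ch: "\<forall>x\<in>Gs. \<forall>y\<in>Gs. x \<subseteq> y \<or> y \<subseteq> x"
    proof (intro ballI)
      fix x y assume "x\<in>Gs" "y\<in>Gs"
      then obtain a b where "a\<in>C" "b\<in>C" "x = -a" "y = -b" unfolding Gs_def by auto
      then show "x \<subseteq> y \<or> y \<subseteq> x" using ch by simp
    qed
    have UC: "\<Union>C = - \<Inter>Gs" unfolding Gs_def by auto
    have "\<Inter>Gs \<in> A"
    proof -
      have sub: "\<Inter>Gs \<subseteq> G0" using GsA Gs_ne unfolding A_def by auto
      have cl: "closed (\<Inter>Gs)" using GsA unfolding A_def by (intro closed_Inter) auto
      have GF: "G \<subseteq> F" if "G \<in> Gs" for G using that GsA unfolding A_def face_def by auto
      have GFc: "face G F" if "G \<in> Gs" for G using that GsA unfolding A_def by auto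
      have fc: "face (\<Inter>Gs) F"
        unfolding face_def
      proof (intro conjI ballI allI impI)
        show "\<Inter>Gs \<subseteq> F" using GF Gs_ne by blast
        fix \<tau> \<rho> t assume h: "\<tau> \<in> F" "\<rho> \<in> F" "0 < t \<and> t < 1 \<and> dcomb t \<tau> \<rho> \<in> \<Inter>Gs"
        have "\<tau> \<in> G \<and> \<rho> \<in> G" if "G \<in> Gs" for G
          using GFc[OF that] h that unfolding face_def by blast
        then show "\<tau> \<in> \<Inter>Gs" "\<rho> \<in> \<Inter>Gs" by auto
      qed
      have "F \<inter> \<Inter>Gs \<noteq> {}"
      proof (rule compact_imp_fip[OF F(1)])
        show "closed T'" if "T' \<in> Gs" for T' using that GsA unfolding A_def by auto
      next
        fix F' assume F': "finite F'" "F' \<subseteq> Gs"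
        show "F \<inter> \<Inter>F' \<noteq> {}"
        proof (cases "F' = {}")
          case True
          then show ?thesis using G0 unfolding face_def by auto
        next
          case False
          then have "\<Inter>F' \<in> F'" using finite_chain_Inter[OF F'(1) False] Gs_ch F'(2) by blast
          then have "\<Inter>F' \<in> A" "\<Inter>F' \<subseteq> F" using F'(2) GsA GF by auto
          then show ?thesis unfolding A_def by auto
        qed
      qed
      then have "\<Inter>Gs \<noteq> {}" by auto
      then show ?thesis unfolding A_def using sub cl fc by auto
    qed
    then show "\<Union>C \<in> uminus ` A" using UC by auto
  qed
  then obtain M' where M': "M' \<in> uminus ` A" "\<forall>X\<in>uminus ` A. M' \<subseteq> X \<longrightarrow> X = M'" by blast
  then obtain M where MA: "M \<in> A" and MM: "M' = - M" by blast
  have Mmin: "G = M" if "G \<in> A" "G \<subseteq> M" for G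
  proof -
    have "-G \<in> uminus ` A" using that(1) by (rule imageI)
    moreover have "M' \<subseteq> -G" using that(2) MM by simp
    ultimately have "-G = M'" using M'(2) by (meson ballE)
    then show ?thesis using MM by simp
  qed
  have MA0: "M \<subseteq> G0 \<and> M \<noteq> {} \<and> closed M \<and> face M F" using MA unfolding A_def by (rule CollectD)
  have MF2: "face M F" using MA0 by (elim conjE)
  have MF3: "closed M" using MA0 by (elim conjE)
  have MF4: "M \<noteq> {}" using MA0 by (elim conjE)
  have MF5: "M \<subseteq> G0" using MA0 by (elim conjE)
  have MF1: "M \<subseteq> F" using MF2 unfolding face_def by (elim conjE)
  note MF = MF1 MF2 MF3 MF4 MF5
  obtain e where e: "e \<in> M" using MF4 by blast
  have single: "\<tau> = e" if "\<tau> \<in> M" for \<tau>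
  proof (rule ccontr)
    assume ne: "\<tau> \<noteq> e"
    have "\<tau> \<in> Dl" "e \<in> Dl" using that e MF1 F(2) by (meson subsetD)+
    then obtain w where w: "ell w \<tau> \<noteq> ell w e" using dual_ne_ell[OF _ _ ne] by blast
    have cM: "compact M" using compact_Int_closed[OF F(1) MF(3)] MF(1) by (simp add: Int_absorb1)
    obtain m where m: "{\<sigma>\<in>M. ell w \<sigma> = m} \<noteq> {}" "closed {\<sigma>\<in>M. ell w \<sigma> = m}"
      "face {\<sigma>\<in>M. ell w \<sigma> = m} M" "\<forall>\<sigma>\<in>M. ell w \<sigma> \<le> m"
      using argmax_face[OF cM MF(4)] by blast
    have "face {\<sigma>\<in>M. ell w \<sigma> = m} F"
      using m(3) MF(2) unfolding face_def by blast
    then have "{\<sigma>\<in>M. ell w \<sigma> = m} \<in> A" using m MF unfolding A_def by auto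
    then have "{\<sigma>\<in>M. ell w \<sigma> = m} = M" using Mmin by auto
    then have "ell w \<tau> = m" "ell w e = m" using that e by auto
    then show False using w by simp
  qed
  have "e \<in> extreme_points F"
    unfolding extreme_points_def
  proof (intro CollectI conjI ballI allI impI)
    show "e \<in> F" using e MF by auto
    fix \<tau> \<rho> t assume "\<tau> \<in> F" "\<rho> \<in> F" "0 < t \<and> t < 1 \<and> e = dcomb t \<tau> \<rho>"
    then have "\<tau> \<in> M" "\<rho> \<in> M" using MF(2) e unfolding face_def by metis+
    then show "\<tau> = \<rho>" using single by auto
  qed
  then show ?thesis using e MF by auto
qed


lemma dcomb_scaleR: "dcomb t \<sigma> \<rho> A = t *\<^sub>R \<sigma> A + (1 - t) *\<^sub>R \<rho> A"
  unfolding dcomb_def by (simp add: scaleR_conv_of_real)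

lemma mix_coeffs:
  fixes t s u :: real
  assumes "0 \<le> t" "t \<le> 1" "0 \<le> s" "s \<le> 1" "0 \<le> u" "u \<le> 1"
  defines "\<alpha> \<equiv> t * s + (1 - t) * u"
  defines "p \<equiv> (if \<alpha> = 0 then 1 else t * s / \<alpha>)"
  defines "q \<equiv> (if \<alpha> = 1 then 1 else t * (1 - s) / (1 - \<alpha>))"
  shows "0 \<le> \<alpha>" "\<alpha> \<le> 1" "0 \<le> p" "p \<le> 1" "0 \<le> q" "q \<le> 1"
    "\<alpha> * p = t * s" "\<alpha> * (1 - p) = (1 - t) * u" "(1 - \<alpha>) * q = t * (1 - s)" "(1 - \<alpha>) * (1 - q) = (1 - t) * (1 - u)"
proof -
  have n1: "0 \<le> t * s" "0 \<le> (1 - t) * u" "0 \<le> t * (1 - s)" "0 \<le> (1 - t) * (1 - u)"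
    using assms(1-6) by simp_all
  have om: "1 - \<alpha> = t * (1 - s) + (1 - t) * (1 - u)" unfolding \<alpha>_def by (simp add: algebra_simps)
  show a0: "0 \<le> \<alpha>" unfolding \<alpha>_def using n1 by simp
  show a1: "\<alpha> \<le> 1" using om n1 by simp
  show "0 \<le> p" unfolding p_def using n1 a0 by simp
  show "p \<le> 1" unfolding p_def using n1 a0 by (simp add: \<alpha>_def divide_le_eq_1)
  show "0 \<le> q" unfolding q_def using n1 a1 by simp
  show "q \<le> 1" unfolding q_def using n1 a1 om by (simp add: divide_le_eq_1)
  show ap: "\<alpha> * p = t * s"
  proof (cases "\<alpha> = 0")
    case True
    then have "t * s = 0" using n1 unfolding \<alpha>_def by linarith
    then show ?thesis using True by simp
  qed (simp add: p_def)
  show "\<alpha> * (1 - p) = (1 - t) * u" using ap by (simp add: algebra_simps \<alpha>_def)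
  show aq: "(1 - \<alpha>) * q = t * (1 - s)"
  proof (cases "\<alpha> = 1")
    case True
    then have "t * (1 - s) = 0" using n1 om by linarith
    then show ?thesis using True by simp
  next
    case False
    then have "1 - \<alpha> \<noteq> 0" by simp
    then show ?thesis by (simp add: q_def False)
  qed
  have "(1 - \<alpha>) * (1 - q) = (1 - \<alpha>) - (1 - \<alpha>) * q" by (simp add: algebra_simps)
  also have "\<dots> = (1 - t) * (1 - u)" using aq om by simp
  finally show "(1 - \<alpha>) * (1 - q) = (1 - t) * (1 - u)" .
qed

lemma mix_vec:
  fixes a b c d :: "'v::real_vector"
  assumes "\<alpha> * p = t * s" "\<alpha> * (1 - p) = (1 - t) * u" "(1 - \<alpha>) * q = t * (1 - s)" "(1 - \<alpha>) * (1 - q) = (1 - t) * (1 - u)"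
  shows "t *\<^sub>R (s *\<^sub>R a + (1 - s) *\<^sub>R b) + (1 - t) *\<^sub>R (u *\<^sub>R c + (1 - u) *\<^sub>R d) =
         \<alpha> *\<^sub>R (p *\<^sub>R a + (1 - p) *\<^sub>R c) + (1 - \<alpha>) *\<^sub>R (q *\<^sub>R b + (1 - q) *\<^sub>R d)"
proof -
  have "\<alpha> *\<^sub>R (p *\<^sub>R a + (1 - p) *\<^sub>R c) + (1 - \<alpha>) *\<^sub>R (q *\<^sub>R b + (1 - q) *\<^sub>R d) =
        (\<alpha> * p) *\<^sub>R a + (\<alpha> * (1 - p)) *\<^sub>R c + ((1 - \<alpha>) * q) *\<^sub>R b + ((1 - \<alpha>) * (1 - q)) *\<^sub>R d"
    by (simp only: scaleR_add_right scaleR_scaleR add.assoc)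
  also have "\<dots> = (t * s) *\<^sub>R a + ((1 - t) * u) *\<^sub>R c + (t * (1 - s)) *\<^sub>R b + ((1 - t) * (1 - u)) *\<^sub>R d"
    by (simp only: assms)
  also have "\<dots> = t *\<^sub>R (s *\<^sub>R a + (1 - s) *\<^sub>R b) + (1 - t) *\<^sub>R (u *\<^sub>R c + (1 - u) *\<^sub>R d)"
    by (simp only: scaleR_add_right scaleR_scaleR add_ac)
  finally show ?thesis by simp
qed

definition hull2 :: "('a \<Rightarrow> 'k) set \<Rightarrow> ('a \<Rightarrow> 'k) set \<Rightarrow> ('a \<Rightarrow> 'k) set" where
  "hull2 K L = (if K = {} then L else if L = {} then K else (\<lambda>(t, k, l). dcomb t k l) ` ({0..1} \<times> K \<times> L))"

lemma hull2_compact: assumes "compact K" "compact L" shows "compact (hull2 K L)"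
proof -
  have "continuous_on ({0..1} \<times> K \<times> L) (\<lambda>(t, k, l). dcomb t k l)"
  proof (rule continuous_on_coordinatewise_then_product)
    fix A
    have "continuous_on ({0..1} \<times> K \<times> L) (\<lambda>x. of_real (fst x) * (fst (snd x)) A + of_real (1 - fst x) * (snd (snd x)) A)"
      by (intro continuous_intros continuous_on_compose2[OF continuous_on_product_coordinates]) auto
    then show "continuous_on ({0..1} \<times> K \<times> L) (\<lambda>x. (case x of (t, k, l) \<Rightarrow> dcomb t k l) A)"
      by (simp add: dcomb_def case_prod_beta)
  qed
  then have "compact ((\<lambda>(t, k, l). dcomb t k l) ` ({0..1} \<times> K \<times> L))"
    using assms by (intro compact_continuous_image compact_Times) auto
  then show ?thesis unfolding hull2_def using assms by auto
qed

lemma hull2_sub1: "K \<subseteq> hull2 K L"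
proof (cases "K = {} \<or> L = {}")
  case False
  then obtain l where "l \<in> L" by auto
  have "k \<in> (\<lambda>(t, k, l). dcomb t k l) ` ({0..1} \<times> K \<times> L)" if "k \<in> K" for k
    using that \<open>l \<in> L\<close> by (intro image_eqI[of _ _ "(1, k, l)"]) auto
  then show ?thesis using False unfolding hull2_def by auto
qed (auto simp: hull2_def)

lemma hull2_sub2: "L \<subseteq> hull2 K L"
proof (cases "K = {} \<or> L = {}")
  case False
  then obtain k where "k \<in> K" by auto
  have "l \<in> (\<lambda>(t, k, l). dcomb t k l) ` ({0..1} \<times> K \<times> L)" if "l \<in> L" for l
    using that \<open>k \<in> K\<close> by (intro image_eqI[of _ _ "(0, k, l)"]) auto
  then show ?thesis using False unfolding hull2_def by auto
qed (auto simp: hull2_def)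

lemma hull2_subF: assumes "K \<subseteq> F" "L \<subseteq> F" "convex_dual F" shows "hull2 K L \<subseteq> F"
proof -
  have "dcomb t k l \<in> F" if "0\<le>t" "t\<le>1" "k\<in>K" "l\<in>L" for t k l
    using assms that unfolding convex_dual_def by blast
  then show ?thesis using assms unfolding hull2_def by auto
qed

lemma hull2_convex: assumes "convex_dual K" "convex_dual L" shows "convex_dual (hull2 K L)"
proof (cases "K = {} \<or> L = {}")
  case True
  then show ?thesis using assms unfolding hull2_def by auto
next
  case False
  let ?H = "(\<lambda>(t, k, l). dcomb t k l) ` ({0..1} \<times> K \<times> L)"
  have "dcomb t x y \<in> ?H" if "x \<in> ?H" "y \<in> ?H" "0 \<le> t" "t \<le> 1" for x y t
  proof -
    from that(1) obtain z where z: "x = (\<lambda>(t, k, l). dcomb t k l) z" "z \<in> {0..1} \<times> K \<times> L" by (rule imageE)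
    obtain s k1 l1 where zz: "z = (s, k1, l1)" by (cases z) auto
    have x: "x = dcomb s k1 l1" "0 \<le> s" "s \<le> 1" "k1 \<in> K" "l1 \<in> L" using z zz by auto
    from that(2) obtain z' where z': "y = (\<lambda>(t, k, l). dcomb t k l) z'" "z' \<in> {0..1} \<times> K \<times> L" by (rule imageE)
    obtain u k2 l2 where zz': "z' = (u, k2, l2)" by (cases z') auto
    have y: "y = dcomb u k2 l2" "0 \<le> u" "u \<le> 1" "k2 \<in> K" "l2 \<in> L" using z' zz' by auto
    define \<alpha> where "\<alpha> = t * s + (1 - t) * u"
    define p where "p = (if \<alpha> = 0 then 1 else t * s / \<alpha>)"
    define q where "q = (if \<alpha> = 1 then 1 else t * (1 - s) / (1 - \<alpha>))"
    note co = mix_coeffs[OF that(3,4) x(2,3) y(2,3), folded \<alpha>_def, folded p_def q_def]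
    have "dcomb t x y = dcomb \<alpha> (dcomb p k1 k2) (dcomb q l1 l2)"
      unfolding x(1) y(1) by (rule ext) (simp only: dcomb_scaleR mix_vec[OF co(7-10)])
    moreover have "dcomb p k1 k2 \<in> K" "dcomb q l1 l2 \<in> L"
      using assms co x y unfolding convex_dual_def by auto
    ultimately show ?thesis using co by (intro image_eqI[of _ _ "(\<alpha>, dcomb p k1 k2, dcomb q l1 l2)"]) auto
  qed
  then show ?thesis using False unfolding hull2_def convex_dual_def by auto
qed

lemma hull2_notin:
  assumes "e \<in> extreme_points F" "K \<subseteq> F" "L \<subseteq> F" "e \<notin> K" "e \<notin> L"
  shows "e \<notin> hull2 K L"
proof (cases "K = {} \<or> L = {}")
  case True
  then show ?thesis using assms unfolding hull2_def by auto
next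
  case False
  have "e \<noteq> dcomb t k l" if tt: "0 \<le> t" "t \<le> 1" "k \<in> K" "l \<in> L" for t k l
  proof
    assume e: "e = dcomb t k l"
    consider "t = 0" | "t = 1" | "0 < t \<and> t < 1" using tt by linarith
    then show False
    proof cases
      case 1 then show ?thesis using e tt assms by simp
    next
      case 2 then show ?thesis using e tt assms by simp
    next
      case 3
      have "k \<in> F" "l \<in> F" using tt assms by auto
      then have "k = l" using assms(1) e 3 unfolding extreme_points_def by blast
      then show ?thesis using e tt assms by simp
    qed
  qed
  then have "e \<notin> (\<lambda>(t, k, l). dcomb t k l) ` ({0..1} \<times> K \<times> L)" by fastforce
  then show ?thesis using False unfolding hull2_def by auto
qed


definition Hyp :: "('a \<times> real) list \<Rightarrow> ('a \<Rightarrow> 'k) \<Rightarrow> bool" where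
  "Hyp M \<tau> \<longleftrightarrow> (\<forall>x\<in>set M. snd x \<le> ell (fst x) \<tau>)"

definition Sep :: "('a \<Rightarrow> 'k) set \<Rightarrow> ('a \<times> real) list \<Rightarrow> bool" where
  "Sep G M \<longleftrightarrow> (\<exists>B d \<epsilon>. \<epsilon> > 0 \<and> (\<forall>\<tau>\<in>G. ell B \<tau> \<le> d - \<epsilon>) \<and> (\<forall>\<tau>\<in>Dl. Hyp M \<tau> \<longrightarrow> d \<le> ell B \<tau>))"

lemma Hyp_nth: "Hyp M \<tau> \<longleftrightarrow> (\<forall>j<length M. snd (M!j) \<le> ell (fst (M!j)) \<tau>)"
proof
  assume h: "Hyp M \<tau>"
  show "\<forall>j<length M. snd (M!j) \<le> ell (fst (M!j)) \<tau>"
  proof (intro allI impI)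
    fix j assume "j < length M"
    then have "M!j \<in> set M" by simp
    then show "snd (M!j) \<le> ell (fst (M!j)) \<tau>" using h unfolding Hyp_def by (rule bspec[rotated])
  qed
next
  assume h: "\<forall>j<length M. snd (M!j) \<le> ell (fst (M!j)) \<tau>"
  show "Hyp M \<tau>" unfolding Hyp_def
  proof (intro ballI)
    fix x assume "x \<in> set M"
    then obtain j where "j < length M" "x = M!j" by (auto simp: in_set_conv_nth)
    then show "snd x \<le> ell (fst x) \<tau>" using h by simp
  qed
qed

lemma sq_min_le: fixes x y c :: real assumes "c \<le> y" shows "(min (x - c) 0)^2 \<le> (x - y)^2"
proof (cases "c \<le> x")
  case True then show ?thesis by simp
next
  case False
  then have "0 \<le> c - x" "c - x \<le> y - x" using assms by auto
  then have "(c - x)^2 \<le> (y - x)^2" by (intro power_mono) auto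
  moreover have "(min (x - c) 0)^2 = (c - x)^2" using False by (simp add: min_def power2_commute)
  moreover have "(x - y)^2 = (y - x)^2" by (simp add: power2_commute)
  ultimately show ?thesis by simp
qed

lemma lim_nonneg: fixes X Q :: real assumes "\<And>t. 0 < t \<Longrightarrow> t \<le> 1 \<Longrightarrow> 0 \<le> 2*X + t*Q" shows "0 \<le> X"
proof (rule ccontr)
  assume "\<not> 0 \<le> X"
  then have X: "X < 0" by simp
  show False
  proof (cases "Q \<le> 0")
    case True
    then show False using assms[of 1] X by simp
  next
    case False
    define t where "t = min 1 (- X / Q)"
    have t: "0 < t" "t \<le> 1" using X False unfolding t_def by (auto simp: field_simps)
    have "t * Q \<le> (- X / Q) * Q" using False unfolding t_def by (intro mult_right_mono) auto
    then have "t * Q \<le> - X" using False by simp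
    then show False using assms[OF t] X by simp
  qed
qed

lemma sep_lemma:
  assumes C: "compact C" "C \<subseteq> Dl" "convex_dual C" and dis: "\<forall>\<sigma>\<in>C. \<not> Hyp M \<sigma>"
  shows "Sep C M"
proof (cases "C = {}")
  case True
  show ?thesis unfolding Sep_def
    by (intro exI[of _ 0] exI[of _ "0::real"] exI[of _ "1::real"]) (auto simp: True ell_0)
next
  case False
  define n where "n = length M"
  define z where "z j = fst (M!j)" for j
  define c where "c j = snd (M!j)" for j
  have HypE: "Hyp M \<tau> \<longleftrightarrow> (\<forall>j<n. c j \<le> ell (z j) \<tau>)" for \<tau> unfolding Hyp_nth n_def z_def c_def ..
  define \<Phi> where "\<Phi> \<sigma> = (\<Sum>j<n. (min (ell (z j) \<sigma> - c j) 0)^2)" for \<sigma>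
  have "continuous_on C \<Phi>" unfolding \<Phi>_def by (intro continuous_intros ell_cont)
  then obtain \<sigma>s where \<sigma>s: "\<sigma>s \<in> C" "\<forall>\<sigma>\<in>C. \<Phi> \<sigma>s \<le> \<Phi> \<sigma>"
    using continuous_attains_inf[OF C(1) False] by blast
  define \<delta> where "\<delta> j = min (ell (z j) \<sigma>s - c j) 0" for j
  define D where "D = (\<Sum>j<n. (\<delta> j)^2)"
  have D_\<Phi>: "D = \<Phi> \<sigma>s" unfolding D_def \<Phi>_def \<delta>_def ..
  have \<delta>max: "\<delta> j = ell (z j) \<sigma>s - max (ell (z j) \<sigma>s) (c j)" for j
    unfolding \<delta>_def by (simp add: min_def max_def)
  have Dpos: "D > 0"
  proof (rule ccontr)
    assume "\<not> D > 0"
    moreover have "D \<ge> 0" unfolding D_def by (intro sum_nonneg) simp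
    ultimately have "D = 0" by simp
    then have "\<forall>j\<in>{..<n}. (\<delta> j)^2 = 0" unfolding D_def by (subst (asm) sum_nonneg_eq_0_iff) auto
    then have "\<forall>j<n. c j \<le> ell (z j) \<sigma>s"
    proof (intro allI impI)
      fix j assume "\<forall>j\<in>{..<n}. (\<delta> j)^2 = 0" "j < n"
      then have "\<delta> j = 0" by simp
      then show "c j \<le> ell (z j) \<sigma>s" unfolding \<delta>_def by (simp add: min_def split: if_splits)
    qed
    then have "Hyp M \<sigma>s" using HypE by simp
    then show False using dis \<sigma>s by blast
  qed
  have key: "D \<le> (\<Sum>j<n. \<delta> j * (ell (z j) \<sigma> - ell (z j) \<tau>))"
    if \<sigma>: "\<sigma> \<in> C" and \<tau>: "\<tau> \<in> Dl" "Hyp M \<tau>" for \<sigma> \<tau>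
  proof -
    define e where "e j = ell (z j) \<sigma> - ell (z j) \<tau>" for j
    define X where "X = (\<Sum>j<n. \<delta> j * (e j - \<delta> j))"
    define Q where "Q = (\<Sum>j<n. (e j - \<delta> j)^2)"
    have "0 \<le> 2*X + t*Q" if t: "0 < t" "t \<le> 1" for t
    proof -
      let ?\<sigma>t = "dcomb t \<sigma> \<sigma>s"
      have inC: "?\<sigma>t \<in> C" using C(3) \<sigma> \<sigma>s(1) t unfolding convex_dual_def by auto
      have "\<Phi> ?\<sigma>t \<le> (\<Sum>j<n. (\<delta> j + t * (e j - \<delta> j))^2)"
        unfolding \<Phi>_def
      proof (rule sum_mono)
        fix j assume "j \<in> {..<n}"
        then have cj: "c j \<le> ell (z j) \<tau>" using \<tau>(2) HypE by auto
        define b where "b = t * ell (z j) \<tau> + (1 - t) * max (ell (z j) \<sigma>s) (c j)"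
        have "t * c j \<le> t * ell (z j) \<tau>" using cj t by (intro mult_left_mono) auto
        moreover have "(1 - t) * c j \<le> (1 - t) * max (ell (z j) \<sigma>s) (c j)" using t by (intro mult_left_mono) auto
        ultimately have cb: "c j \<le> b" unfolding b_def by (simp add: algebra_simps)
        have "ell (z j) ?\<sigma>t - b = \<delta> j + t * (e j - \<delta> j)"
          unfolding ell_dcomb e_def b_def \<delta>max by (simp add: algebra_simps)
        then show "(min (ell (z j) ?\<sigma>t - c j) 0)^2 \<le> (\<delta> j + t * (e j - \<delta> j))^2"
          using sq_min_le[OF cb, of "ell (z j) ?\<sigma>t"] by simp
      qed
      also have "\<dots> = D + t * (2 * X) + t^2 * Q"
      proof -
        have eq: "(\<delta> j + t * (e j - \<delta> j))^2 = (\<delta> j)^2 + t * (2 * (\<delta> j * (e j - \<delta> j))) + t^2 * (e j - \<delta> j)^2" for j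
          by (simp add: power2_eq_square algebra_simps)
        have "(\<Sum>j<n. (\<delta> j + t * (e j - \<delta> j))^2) = (\<Sum>j<n. (\<delta> j)^2) + (\<Sum>j<n. t * (2 * (\<delta> j * (e j - \<delta> j)))) + (\<Sum>j<n. t^2 * (e j - \<delta> j)^2)"
          unfolding eq by (simp only: sum.distrib)
        also have "\<dots> = D + t * (2 * X) + t^2 * Q"
          unfolding D_def X_def Q_def by (simp only: sum_distrib_left)
        finally show ?thesis .
      qed
      finally have "D \<le> D + t * (2 * X) + t^2 * Q" using \<sigma>s(2) inC D_\<Phi> by force
      then have "0 \<le> t * (2 * X + t * Q)" by (simp add: power2_eq_square algebra_simps)
      then show ?thesis using t by (simp add: zero_le_mult_iff)
    qed
    then have "0 \<le> X" by (rule lim_nonneg)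
    moreover have "X = (\<Sum>j<n. \<delta> j * e j) - D"
      unfolding X_def D_def by (simp add: right_diff_distrib sum_subtractf power2_eq_square)
    ultimately show ?thesis unfolding e_def by simp
  qed
  define B where "B = (\<Sum>j<n. smul (of_real (- \<delta> j)) (z j))"
  have ellB: "ell B \<tau> = (\<Sum>j<n. - \<delta> j * ell (z j) \<tau>)" if "\<tau> \<in> Dl" for \<tau>
    unfolding B_def by (simp only: ell_sum[OF that] ell_scale[OF that])
  obtain \<sigma>m where \<sigma>m: "\<sigma>m \<in> C" "\<forall>\<sigma>\<in>C. ell B \<sigma> \<le> ell B \<sigma>m"
    using continuous_attains_sup[OF C(1) False ell_cont] by blast
  have \<sigma>mD: "\<sigma>m \<in> Dl" using C(2) \<sigma>m(1) by (rule subsetD)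
  show ?thesis unfolding Sep_def
  proof (intro exI conjI)
    show "D > 0" by (rule Dpos)
    show "\<forall>\<tau>\<in>C. ell B \<tau> \<le> (ell B \<sigma>m + D) - D" using \<sigma>m by simp
    show "\<forall>\<tau>\<in>Dl. Hyp M \<tau> \<longrightarrow> ell B \<sigma>m + D \<le> ell B \<tau>"
    proof (intro ballI impI)
      fix \<tau> assume \<tau>: "\<tau> \<in> Dl" "Hyp M \<tau>"
      have "D \<le> (\<Sum>j<n. \<delta> j * (ell (z j) \<sigma>m - ell (z j) \<tau>))" by (rule key[OF \<sigma>m(1) \<tau>])
      moreover have "(\<Sum>j<n. \<delta> j * (ell (z j) \<sigma>m - ell (z j) \<tau>)) = ell B \<tau> - ell B \<sigma>m"
        unfolding ellB[OF \<tau>(1)] ellB[OF \<sigma>mD] by (simp add: right_diff_distrib sum_subtractf sum_negf)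
      ultimately show "ell B \<sigma>m + D \<le> ell B \<tau>" by simp
    qed
  qed
qed


lemma Hyp_append: "Hyp (M1 @ M2) \<tau> \<longleftrightarrow> Hyp M1 \<tau> \<and> Hyp M2 \<tau>"
  unfolding Hyp_def by auto
lemma Hyp_map: "Hyp (map f xs) \<tau> \<longleftrightarrow> (\<forall>y\<in>set xs. snd (f y) \<le> ell (fst (f y)) \<tau>)"
  unfolding Hyp_def by auto
lemma Hyp_two: "Hyp [(A, c), (B, d)] \<tau> \<longleftrightarrow> c \<le> ell A \<tau> \<and> d \<le> ell B \<tau>"
  unfolding Hyp_def by auto

lemma hullL_props:
  assumes "\<forall>x\<in>set Ks. compact (K x) \<and> convex_dual (K x) \<and> K x \<subseteq> F \<and> e \<notin> K x"
    and "e \<in> extreme_points F" "convex_dual F"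
  shows "compact (foldr (\<lambda>x H. hull2 (K x) H) Ks {}) \<and> convex_dual (foldr (\<lambda>x H. hull2 (K x) H) Ks {})
     \<and> foldr (\<lambda>x H. hull2 (K x) H) Ks {} \<subseteq> F \<and> e \<notin> foldr (\<lambda>x H. hull2 (K x) H) Ks {}
     \<and> (\<forall>x\<in>set Ks. K x \<subseteq> foldr (\<lambda>x H. hull2 (K x) H) Ks {})"
  using assms(1)
proof (induction Ks)
  case Nil
  then show ?case by (simp add: convex_dual_def)
next
  case (Cons a Ks)
  let ?H = "foldr (\<lambda>x H. hull2 (K x) H) Ks {}"
  have IH: "compact ?H" "convex_dual ?H" "?H \<subseteq> F" "e \<notin> ?H" "\<forall>x\<in>set Ks. K x \<subseteq> ?H"
    using Cons by auto
  have a: "compact (K a)" "convex_dual (K a)" "K a \<subseteq> F" "e \<notin> K a" using Cons.prems by auto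
  have "compact (hull2 (K a) ?H)" using hull2_compact[OF a(1) IH(1)] .
  moreover have "convex_dual (hull2 (K a) ?H)" using hull2_convex[OF a(2) IH(2)] .
  moreover have "hull2 (K a) ?H \<subseteq> F" using hull2_subF[OF a(3) IH(3) assms(3)] .
  moreover have "e \<notin> hull2 (K a) ?H" using hull2_notin[OF assms(2) a(3) IH(3) a(4) IH(4)] .
  moreover have "\<forall>x\<in>set (a # Ks). K x \<subseteq> hull2 (K a) ?H"
    using hull2_sub1[where K="K a" and L="?H"] hull2_sub2[where K="K a" and L="?H"] IH(5) by auto
  ultimately show ?case by simp
qed

lemma choquet:
  assumes F: "compact F" "F \<subseteq> Dl" "convex_dual F" and e: "e \<in> extreme_points F"
    and Ks: "\<forall>x\<in>set Ks. snd x < ell (fst x) e"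
  shows "\<exists>A c. c < ell A e \<and> (\<forall>x\<in>set Ks. Sep F [(A, c), (- fst x, - snd x)])"
proof -
  have eF: "e \<in> F" using e unfolding extreme_points_def by auto
  have eD: "e \<in> Dl" using F(2) eF by (rule subsetD)
  define K where "K x = {\<sigma>\<in>F. ell (fst x) \<sigma> \<le> snd x}" for x
  have Kp: "\<forall>x\<in>set Ks. compact (K x) \<and> convex_dual (K x) \<and> K x \<subseteq> F \<and> e \<notin> K x"
  proof
    fix x assume x: "x \<in> set Ks"
    have "K x = F \<inter> {\<sigma>. ell (fst x) \<sigma> \<le> snd x}" unfolding K_def by auto
    then have "compact (K x)" using compact_Int_closed[OF F(1) closed_ell_le] by simp
    moreover have "convex_dual (K x)" unfolding K_def by (rule cvx_cap_le[OF F(3)])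
    moreover have "e \<notin> K x" using Ks x unfolding K_def by fastforce
    ultimately show "compact (K x) \<and> convex_dual (K x) \<and> K x \<subseteq> F \<and> e \<notin> K x" unfolding K_def by auto
  qed
  define C where "C = foldr (\<lambda>x H. hull2 (K x) H) Ks {}"
  have Cp: "compact C" "convex_dual C" "C \<subseteq> F" "e \<notin> C" "\<forall>x\<in>set Ks. K x \<subseteq> C"
    using hullL_props[OF Kp e F(3)] unfolding C_def by auto
  have "open (- C)" using compact_closed_fun[OF Cp(1)] by (simp add: open_Compl)
  then have "openin (product_topology (\<lambda>_::'a. (euclidean::'k topology)) UNIV) (- C)"
    by (simp add: euclidean_product_topology)
  then have "\<forall>x\<in>-C. \<exists>U. finite {i \<in> UNIV. U i \<noteq> topspace euclidean} \<and> (\<forall>i\<in>UNIV. openin euclidean (U i))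
      \<and> x \<in> PiE UNIV U \<and> PiE UNIV U \<subseteq> - C"
    unfolding openin_product_topology_alt .
  moreover have "e \<in> - C" using Cp(4) by simp
  ultimately obtain U' where U'0: "finite {i \<in> UNIV. U' i \<noteq> topspace euclidean}"
    "e \<in> PiE UNIV U'" "PiE UNIV U' \<subseteq> - C" by (meson bspec)
  have U': "finite {i. U' i \<noteq> UNIV}" "e \<in> PiE UNIV U'" "PiE UNIV U' \<subseteq> - C" using U'0 by simp_all
  define I where "I = {i. U' i \<noteq> UNIV}"
  have "finite (I \<times> J)" using U'(1) J_fin unfolding I_def by simp
  then obtain xs where xs: "set xs = I \<times> J" using finite_list by blast
  define f1 where "f1 y = (smul (snd y) (fst y), ell (smul (snd y) (fst y)) e)" for y
  define f2 where "f2 y = (- smul (snd y) (fst y), - ell (smul (snd y) (fst y)) e)" for y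
  define Me where "Me = map f1 xs @ map f2 xs"
  have HypMe: "\<tau> \<notin> C" if \<tau>: "\<tau> \<in> Dl" "Hyp Me \<tau>" for \<tau>
  proof -
    have eqx: "\<tau> x = e x" if x: "x \<in> I" for x
    proof -
      have "re (c * (\<tau> x - e x)) = 0" if c: "c \<in> J" for c
      proof -
        have "(x, c) \<in> set xs" using x c xs by auto
        then have "ell (smul c x) e \<le> ell (smul c x) \<tau>" "- ell (smul c x) e \<le> ell (- smul c x) \<tau>"
          using \<tau>(2) unfolding Me_def Hyp_append Hyp_map f1_def f2_def by force+
        then have "ell (smul c x) \<tau> = ell (smul c x) e" using ell_neg[OF \<tau>(1)] by simp
        then have "re (c * \<tau> x) = re (c * e x)" unfolding ell_def using \<tau>(1) eD by (simp add: dual_smul)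
        then show ?thesis by (simp add: right_diff_distrib re_diff)
      qed
      then have "norm (\<tau> x - e x) \<le> 0" using J_norm[of "\<tau> x - e x"] by simp
      then show ?thesis by simp
    qed
    have "\<forall>x. \<tau> x \<in> U' x"
    proof (intro allI)
      fix x show "\<tau> x \<in> U' x"
      proof (cases "x \<in> I")
        case True
        then show ?thesis using eqx[OF True] U'(2) by (auto simp: PiE_iff)
      next
        case False
        then show ?thesis unfolding I_def by auto
      qed
    qed
    then have "\<tau> \<in> PiE UNIV U'" by (simp add: PiE_iff)
    then show ?thesis using U'(3) by auto
  qed
  have "\<forall>\<sigma>\<in>C. \<not> Hyp Me \<sigma>" using HypMe Cp(3) F(2) by blast
  then obtain B d \<epsilon> where S: "\<epsilon> > 0" "\<forall>\<tau>\<in>C. ell B \<tau> \<le> d - \<epsilon>" "\<forall>\<tau>\<in>Dl. Hyp Me \<tau> \<longrightarrow> d \<le> ell B \<tau>"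
    using sep_lemma[OF Cp(1) _ Cp(2)] Cp(3) F(2) unfolding Sep_def by blast
  have "Hyp Me e" unfolding Me_def Hyp_append Hyp_map f1_def f2_def using ell_neg[OF eD] by simp
  then have de: "d \<le> ell B e" using S(3) eD by blast
  show ?thesis
  proof (intro exI conjI ballI)
    show "d - \<epsilon>/2 < ell B e" using de S(1) by simp
    fix x assume x: "x \<in> set Ks"
    show "Sep F [(B, d - \<epsilon>/2), (- fst x, - snd x)]"
    proof (rule sep_lemma[OF F])
      show "\<forall>\<sigma>\<in>F. \<not> Hyp [(B, d - \<epsilon>/2), (- fst x, - snd x)] \<sigma>"
      proof (intro ballI notI)
        fix \<sigma> assume \<sigma>: "\<sigma> \<in> F" "Hyp [(B, d - \<epsilon>/2), (- fst x, - snd x)] \<sigma>"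
        have \<sigma>D: "\<sigma> \<in> Dl" using F(2) \<sigma>(1) by (rule subsetD)
        have h: "d - \<epsilon>/2 \<le> ell B \<sigma>" "- snd x \<le> ell (- fst x) \<sigma>" using \<sigma>(2) unfolding Hyp_two by auto
        then have "ell (fst x) \<sigma> \<le> snd x" using ell_neg[OF \<sigma>D] by simp
        then have "\<sigma> \<in> K x" unfolding K_def using \<sigma>(1) by simp
        then have "\<sigma> \<in> C" using Cp(5) x by blast
        then have "ell B \<sigma> \<le> d - \<epsilon>" using S(2) by blast
        then show False using h(1) S(1) by simp
      qed
    qed
  qed
qed


abbreviation "HP \<equiv> (\<lambda>W::('a \<Rightarrow> 'k) set set. \<forall>F\<in>W. \<exists>As e. finite As \<and> e > 0 \<and>
      (\<forall>G. (\<forall>A\<in>As. dH A F G < ereal e) \<longrightarrow> G \<in> W))"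

lemma dH_mono: "dH A F G < ereal e \<Longrightarrow> e \<le> e' \<Longrightarrow> dH A F G < ereal e'"
  by (meson ereal_less_eq(3) less_le_trans)

lemma istop_HP: "istopology HP"
  unfolding istopology_def
proof (intro conjI allI impI)
  fix S T assume S: "HP S" and T: "HP T"
  show "HP (S \<inter> T)"
  proof
    fix F assume F: "F \<in> S \<inter> T"
    obtain As e where A: "finite As" "e > 0" "\<forall>G. (\<forall>A\<in>As. dH A F G < ereal e) \<longrightarrow> G \<in> S" using S F by blast
    obtain Bs e' where B: "finite Bs" "e' > 0" "\<forall>G. (\<forall>A\<in>Bs. dH A F G < ereal e') \<longrightarrow> G \<in> T" using T F by blast
    have "\<forall>G. (\<forall>A\<in>As \<union> Bs. dH A F G < ereal (min e e')) \<longrightarrow> G \<in> S \<inter> T"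
      using A(3) B(3) dH_mono by (meson IntI UnI1 UnI2 min.cobounded1 min.cobounded2)
    then show "\<exists>As e. finite As \<and> e > 0 \<and> (\<forall>G. (\<forall>A\<in>As. dH A F G < ereal e) \<longrightarrow> G \<in> S \<inter> T)"
      using A(1,2) B(1,2) by (intro exI[of _ "As \<union> Bs"] exI[of _ "min e e'"]) auto
  qed
next
  fix K assume K: "\<forall>S\<in>K. HP S"
  show "HP (\<Union>K)"
  proof
    fix F assume "F \<in> \<Union>K"
    then obtain S where "S \<in> K" "F \<in> S" by blast
    then obtain As e where "finite As" "e > 0" "\<forall>G. (\<forall>A\<in>As. dH A F G < ereal e) \<longrightarrow> G \<in> S" using K by blast
    then show "\<exists>As e. finite As \<and> e > 0 \<and> (\<forall>G. (\<forall>A\<in>As. dH A F G < ereal e) \<longrightarrow> G \<in> \<Union>K)"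
      using \<open>S \<in> K\<close> by blast
  qed
qed

lemma openin_hyper: "openin (weakstar_hausdorff_hypertopology :: ('a \<Rightarrow> 'k) set topology) W \<longleftrightarrow> HP W"
  unfolding weakstar_hausdorff_hypertopology_def using istop_HP by simp

lemma topspace_hyper: "topspace (weakstar_hausdorff_hypertopology :: ('a \<Rightarrow> 'k) set topology) = UNIV"
proof -
  have "openin (weakstar_hausdorff_hypertopology :: ('a \<Rightarrow> 'k) set topology) UNIV"
    unfolding openin_hyper by (intro ballI exI[of _ "{}"] exI[of _ "1::real"]) auto
  then show ?thesis using openin_subset by blast
qed

lemma dH_lt:
  assumes "dH A F G < ereal e"
  shows "\<forall>\<sigma>\<in>F. \<exists>\<tau>\<in>G. norm (\<sigma> A - \<tau> A) < e" "\<forall>\<tau>\<in>G. \<exists>\<sigma>\<in>F. norm (\<sigma> A - \<tau> A) < e"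
proof -
  have h1: "(SUP \<sigma>\<in>F. INF \<tau>\<in>G. ereal (norm (\<sigma> A - \<tau> A))) < ereal e"
   and h2: "(SUP \<tau>\<in>G. INF \<sigma>\<in>F. ereal (norm (\<sigma> A - \<tau> A))) < ereal e"
    using assms unfolding dH_def by auto
  show "\<forall>\<sigma>\<in>F. \<exists>\<tau>\<in>G. norm (\<sigma> A - \<tau> A) < e"
  proof
    fix \<sigma> assume "\<sigma> \<in> F"
    then have "(INF \<tau>\<in>G. ereal (norm (\<sigma> A - \<tau> A))) < ereal e" using SUP_lessD[OF h1] by blast
    then show "\<exists>\<tau>\<in>G. norm (\<sigma> A - \<tau> A) < e" unfolding INF_less_iff by auto
  qed
  show "\<forall>\<tau>\<in>G. \<exists>\<sigma>\<in>F. norm (\<sigma> A - \<tau> A) < e"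
  proof
    fix \<tau> assume "\<tau> \<in> G"
    then have "(INF \<sigma>\<in>F. ereal (norm (\<sigma> A - \<tau> A))) < ereal e" using SUP_lessD[OF h2] by blast
    then show "\<exists>\<sigma>\<in>F. norm (\<sigma> A - \<tau> A) < e" unfolding INF_less_iff by auto
  qed
qed

abbreviation "Rob F Q \<equiv> (\<exists>As e. finite As \<and> e > 0 \<and> (\<forall>G. (\<forall>A\<in>As. dH A F G < ereal e) \<longrightarrow> Q G))"

lemma rob_conj: "Rob F Q1 \<Longrightarrow> Rob F Q2 \<Longrightarrow> Rob F (\<lambda>G. Q1 G \<and> Q2 G)"
proof -
  assume "Rob F Q1" "Rob F Q2"
  then obtain As e Bs e' where A: "finite As" "e > 0" "\<forall>G. (\<forall>A\<in>As. dH A F G < ereal e) \<longrightarrow> Q1 G"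
    and B: "finite Bs" "e' > 0" "\<forall>G. (\<forall>A\<in>Bs. dH A F G < ereal e') \<longrightarrow> Q2 G" by blast
  have "\<forall>G. (\<forall>A\<in>As \<union> Bs. dH A F G < ereal (min e e')) \<longrightarrow> Q1 G \<and> Q2 G"
    using A(3) B(3) dH_mono by (meson UnI1 UnI2 min.cobounded1 min.cobounded2)
  then show ?thesis using A(1,2) B(1,2) by (intro exI[of _ "As \<union> Bs"] exI[of _ "min e e'"]) auto
qed

lemma rob_finite: "finite I \<Longrightarrow> (\<forall>i\<in>I. Rob F (Q i)) \<Longrightarrow> Rob F (\<lambda>G. \<forall>i\<in>I. Q i G)"
proof (induction I rule: finite_induct)
  case empty
  show ?case by (intro exI[of _ "{}"] exI[of _ "1::real"]) auto
next
  case (insert x I)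
  then have "Rob F (\<lambda>G. Q x G \<and> (\<forall>i\<in>I. Q i G))" by (intro rob_conj) auto
  then show ?case by simp
qed

lemma sep_robust: assumes "Sep F M" shows "Rob F (\<lambda>G. Sep G M)"
proof -
  obtain B d \<epsilon> where S: "\<epsilon> > 0" "\<forall>\<tau>\<in>F. ell B \<tau> \<le> d - \<epsilon>" "\<forall>\<tau>\<in>Dl. Hyp M \<tau> \<longrightarrow> d \<le> ell B \<tau>"
    using assms unfolding Sep_def by (elim exE conjE) (rule that; assumption)
  have "Sep G M" if G: "dH B F G < ereal (\<epsilon>/2)" for G
  proof -
    have *: "ell B \<tau> \<le> d - \<epsilon>/2" if "\<tau> \<in> G" for \<tau>
    proof -
      have "\<exists>\<sigma>\<in>F. norm (\<sigma> B - \<tau> B) < \<epsilon>/2" using dH_lt(2)[OF G] that by (rule bspec)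
      then obtain \<sigma> where \<sigma>: "\<sigma> \<in> F" "norm (\<sigma> B - \<tau> B) < \<epsilon>/2" by (rule bexE)
      have "ell B \<sigma> \<le> d - \<epsilon>" using S(2) \<sigma>(1) by (rule bspec)
      moreover have "ell B \<tau> - ell B \<sigma> \<le> norm (\<sigma> B - \<tau> B)"
        using ell_diff_le[of B \<tau> \<sigma>] by (simp add: norm_minus_commute)
      ultimately show ?thesis using \<sigma>(2) by linarith
    qed
    have "\<epsilon>/2 > 0 \<and> (\<forall>\<tau>\<in>G. ell B \<tau> \<le> d - \<epsilon>/2) \<and> (\<forall>\<tau>\<in>Dl. Hyp M \<tau> \<longrightarrow> d \<le> ell B \<tau>)"
      using S(1) S(3) * by simp
    then show ?thesis unfolding Sep_def by blast
  qed
  then have "finite {B} \<and> \<epsilon>/2 > 0 \<and> (\<forall>G. (\<forall>A\<in>{B}. dH A F G < ereal (\<epsilon>/2)) \<longrightarrow> Sep G M)"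
    using S(1) by simp
  then show ?thesis by blast
qed

lemma pos_robust: assumes "\<sigma> \<in> F" "c < ell A \<sigma>" shows "Rob F (\<lambda>G. \<exists>\<tau>\<in>G. c < ell A \<tau>)"
proof -
  have "\<exists>\<tau>\<in>G. c < ell A \<tau>" if G: "dH A F G < ereal (ell A \<sigma> - c)" for G
  proof -
    obtain \<tau> where "\<tau> \<in> G" "norm (\<sigma> A - \<tau> A) < ell A \<sigma> - c" using dH_lt(1)[OF G] assms(1) by blast
    moreover have "ell A \<sigma> - ell A \<tau> \<le> norm (\<sigma> A - \<tau> A)" using ell_diff_le[of A \<sigma> \<tau>] by simp
    ultimately show ?thesis by force
  qed
  then show ?thesis using assms(2) by (intro exI[of _ "{A}"] exI[of _ "ell A \<sigma> - c"]) auto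
qed

definition Wset :: "('a \<times> real \<times> real) list \<Rightarrow> ('a \<Rightarrow> 'k) set set" where
  "Wset L = {G. Sep G (map (\<lambda>x. (fst x, snd (snd x))) L) \<or>
     (\<exists>A c. (\<exists>\<tau>\<in>G. c < ell A \<tau>) \<and> (\<forall>x\<in>set L. Sep G [(A, c), (- fst x, - fst (snd x))]))}"

lemma Wset_open: "openin weakstar_hausdorff_hypertopology (Wset L)"
  unfolding openin_hyper
proof
  fix F assume "F \<in> Wset L"
  then consider (a) "Sep F (map (\<lambda>x. (fst x, snd (snd x))) L)"
    | (b) A c where "\<exists>\<tau>\<in>F. c < ell A \<tau>" "\<forall>x\<in>set L. Sep F [(A, c), (- fst x, - fst (snd x))]"
    unfolding Wset_def by blast
  then show "Rob F (\<lambda>G. G \<in> Wset L)"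
  proof cases
    case a
    from sep_robust[OF a] show ?thesis unfolding Wset_def by (smt (verit) mem_Collect_eq)
  next
    case b
    obtain \<sigma> where \<sigma>: "\<sigma> \<in> F" "c < ell A \<sigma>" using b(1) by blast
    have r1: "Rob F (\<lambda>G. \<exists>\<tau>\<in>G. c < ell A \<tau>)" by (rule pos_robust[OF \<sigma>])
    have r2: "Rob F (\<lambda>G. \<forall>x\<in>set L. Sep G [(A, c), (- fst x, - fst (snd x))])"
    proof (rule rob_finite)
      show "finite (set L)" by simp
      show "\<forall>x\<in>set L. Rob F (\<lambda>G. Sep G [(A, c), (- fst x, - fst (snd x))])"
      proof
        fix x assume "x \<in> set L"
        with b(2) have "Sep F [(A, c), (- fst x, - fst (snd x))]" by (rule bspec)
        then show "Rob F (\<lambda>G. Sep G [(A, c), (- fst x, - fst (snd x))])" by (rule sep_robust)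
      qed
    qed
    from rob_conj[OF r1 r2] obtain As e where R: "finite As" "e > 0"
      "\<forall>G. (\<forall>A\<in>As. dH A F G < ereal e) \<longrightarrow> (\<exists>\<tau>\<in>G. c < ell A \<tau>) \<and> (\<forall>x\<in>set L. Sep G [(A, c), (- fst x, - fst (snd x))])"
      by blast
    have "\<forall>G. (\<forall>A\<in>As. dH A F G < ereal e) \<longrightarrow> G \<in> Wset L"
    proof (intro allI impI)
      fix G assume "\<forall>A\<in>As. dH A F G < ereal e"
      then have "(\<exists>\<tau>\<in>G. c < ell A \<tau>) \<and> (\<forall>x\<in>set L. Sep G [(A, c), (- fst x, - fst (snd x))])" using R(3) by blast
      then show "G \<in> Wset L" unfolding Wset_def by blast
    qed
    then show ?thesis using R(1,2) by blast
  qed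
qed


lemma dense_approx:
  assumes D: "T closure_of D = topspace T" and e: "\<epsilon> > 0"
  shows "\<exists>d\<in>D. \<forall>\<tau>\<in>P. norm (\<tau> x - \<tau> d) \<le> \<epsilon>"
proof -
  let ?N = "{y. smul (of_real (1/\<epsilon>)) (y + - x) \<in> IU}"
  have No: "openin T ?N" by (rule open_pre)
  have xN: "x \<in> ?N" using IU_0 by simp
  have "x \<in> T closure_of D" using D by (simp add: topT)
  then have "\<forall>T'. x \<in> T' \<and> openin T T' \<longrightarrow> (\<exists>y. y \<in> D \<and> y \<in> T')" unfolding in_closure_of by (rule conjunct2)
  then have H: "x \<in> ?N \<and> openin T ?N \<longrightarrow> (\<exists>y. y \<in> D \<and> y \<in> ?N)" by (rule spec)
  have "\<exists>y. y \<in> D \<and> y \<in> ?N" by (rule H[THEN mp, OF conjI[OF xN No]])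
  then obtain y where y: "y \<in> D" "y \<in> ?N" by (elim exE conjE)
  have "\<forall>\<tau>\<in>P. norm (\<tau> x - \<tau> y) \<le> \<epsilon>"
  proof
    fix \<tau> assume \<tau>: "\<tau> \<in> P"
    then have \<tau>D: "\<tau> \<in> Dl" using P_sub by blast
    have "smul (of_real (1/\<epsilon>)) (y + - x) \<in> U" using y(2) IU_sub by blast
    then have "norm (\<tau> (y + - x)) \<le> \<epsilon>" using polar_small[OF \<tau> e] by blast
    moreover have "\<tau> (y + - x) = \<tau> y - \<tau> x" using \<tau>D by (simp only: dual_add dual_neg) simp
    ultimately show "norm (\<tau> x - \<tau> y) \<le> \<epsilon>" by (simp add: norm_minus_commute)
  qed
  then show ?thesis using y(1) by blast
qed

definition Yset :: "'a set \<Rightarrow> 'a set" where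
  "Yset D = (\<lambda>(c, d, b). if b then smul c d else - smul c d) ` (J \<times> D \<times> (UNIV :: bool set))"

definition qa :: "real \<Rightarrow> real \<Rightarrow> real" where "qa v e = (SOME q. q \<in> \<rat> \<and> v - e < q \<and> q < v - e/2)"
definition qb :: "real \<Rightarrow> real \<Rightarrow> real" where "qb v e = (SOME q. q \<in> \<rat> \<and> v - e/2 < q \<and> q < v)"

lemma qab: assumes "e > 0" shows "qa v e \<in> \<rat>" "v - e < qa v e" "qa v e < v - e/2"
  "qb v e \<in> \<rat>" "v - e/2 < qb v e" "qb v e < v"
proof -
  have "\<exists>q. q \<in> \<rat> \<and> v - e < q \<and> q < v - e/2" using Rats_dense_in_real[of "v - e" "v - e/2"] assms by auto
  then have "qa v e \<in> \<rat> \<and> v - e < qa v e \<and> qa v e < v - e/2" unfolding qa_def by (rule someI_ex)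
  then show "qa v e \<in> \<rat>" "v - e < qa v e" "qa v e < v - e/2" by auto
  have "\<exists>q. q \<in> \<rat> \<and> v - e/2 < q \<and> q < v" using Rats_dense_in_real[of "v - e/2" "v"] assms by auto
  then have "qb v e \<in> \<rat> \<and> v - e/2 < qb v e \<and> qb v e < v" unfolding qb_def by (rule someI_ex)
  then show "qb v e \<in> \<rat>" "v - e/2 < qb v e" "qb v e < v" by auto
qed

lemma ell_smul_re: "\<rho> \<in> Dl \<Longrightarrow> ell (smul c x) \<rho> = re (c * \<rho> x)"
  unfolding ell_def by (simp add: dual_smul)

lemma approx:
  assumes D: "T closure_of D = topspace T" and \<sigma>: "\<sigma> \<in> P" and N: "open N'" "\<sigma> \<in> N'"
  shows "\<exists>L. set L \<subseteq> Yset D \<times> (\<rat> \<times> \<rat>) \<and> (\<forall>x\<in>set L. fst (snd x) < snd (snd x))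
     \<and> Hyp (map (\<lambda>x. (fst x, snd (snd x))) L) \<sigma>
     \<and> (\<forall>\<tau>\<in>P. (\<forall>x\<in>set L. fst (snd x) < ell (fst x) \<tau>) \<longrightarrow> \<tau> \<in> N')"
proof -
  have \<sigma>D: "\<sigma> \<in> Dl" using \<sigma> P_sub by blast
  have "openin (product_topology (\<lambda>_::'a. (euclidean::'k topology)) UNIV) N'"
    using N(1) by (simp add: euclidean_product_topology)
  then have "\<forall>x\<in>N'. \<exists>U. finite {i \<in> UNIV. U i \<noteq> topspace euclidean} \<and> (\<forall>i\<in>UNIV. openin euclidean (U i))
      \<and> x \<in> PiE UNIV U \<and> PiE UNIV U \<subseteq> N'"
    unfolding openin_product_topology_alt .
  then have "\<exists>U. finite {i \<in> UNIV. U i \<noteq> topspace euclidean} \<and> (\<forall>i\<in>UNIV. openin euclidean (U i))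
      \<and> \<sigma> \<in> PiE UNIV U \<and> PiE UNIV U \<subseteq> N'" using N(2) by (rule bspec)
  then obtain U' where U'0: "finite {i \<in> UNIV. U' i \<noteq> topspace euclidean}" "\<forall>i\<in>UNIV. openin euclidean (U' i)"
    "\<sigma> \<in> PiE UNIV U'" "PiE UNIV U' \<subseteq> N'" by (elim exE conjE)
  have U': "finite {i. U' i \<noteq> UNIV}" "\<And>i. open (U' i)" "\<And>i. \<sigma> i \<in> U' i" "PiE UNIV U' \<subseteq> N'"
    using U'0 by (simp_all add: PiE_iff)
  define I where "I = {i. U' i \<noteq> UNIV}"
  have rex: "\<exists>r. r > 0 \<and> ball (\<sigma> x) r \<subseteq> U' x" for x using U'(2,3) open_contains_ball by blast
  define r where "r x = (SOME r. r > 0 \<and> ball (\<sigma> x) r \<subseteq> U' x)" for x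
  have r: "r x > 0" "ball (\<sigma> x) (r x) \<subseteq> U' x" for x using someI_ex[OF rex[of x]] unfolding r_def by auto
  have dex: "\<exists>d\<in>D. \<forall>\<tau>\<in>P. norm (\<tau> x - \<tau> d) \<le> r x / 4" for x using dense_approx[OF D, of "r x / 4" x] r(1)[of x] by simp
  define dd where "dd x = (SOME d. d \<in> D \<and> (\<forall>\<tau>\<in>P. norm (\<tau> x - \<tau> d) \<le> r x / 4))" for x
  have dd: "dd x \<in> D" "\<forall>\<tau>\<in>P. norm (\<tau> x - \<tau> (dd x)) \<le> r x / 4" for x
    using someI_ex[OF dex[of x, unfolded Bex_def]] unfolding dd_def by auto
  define \<eta> where "\<eta> x = r x / (4 * (real (card J) + 1))" for x
  have \<eta>: "\<eta> x > 0" "real (card J) * \<eta> x \<le> r x / 4" for x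
  proof -
    show "\<eta> x > 0" unfolding \<eta>_def using r(1)[of x] by simp
    have "real (card J) * \<eta> x = (r x / 4) * (real (card J) / (real (card J) + 1))"
      unfolding \<eta>_def by (simp add: field_simps)
    also have "\<dots> \<le> (r x / 4) * 1" using r(1)[of x] by (intro mult_left_mono) auto
    finally show "real (card J) * \<eta> x \<le> r x / 4" by simp
  qed
  define wf where "wf y = (if snd (snd y) then smul (fst (snd y)) (dd (fst y)) else - smul (fst (snd y)) (dd (fst y)))"
    for y :: "'a \<times> 'k \<times> bool"
  define g where "g y = (wf y, qa (ell (wf y) \<sigma>) (\<eta> (fst y)), qb (ell (wf y) \<sigma>) (\<eta> (fst y)))" for y
  have "finite (I \<times> J \<times> (UNIV :: bool set))" using U'(1) J_fin unfolding I_def by simp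
  then obtain xs where xs: "set xs = I \<times> J \<times> (UNIV :: bool set)" using finite_list by blast
  define L where "L = map g xs"
  have g_props: "fst (snd (g y)) < snd (snd (g y))" "snd (snd (g y)) \<le> ell (fst (g y)) \<sigma>"
      "ell (fst (g y)) \<sigma> - \<eta> (fst y) < fst (snd (g y))" for y
  proof -
    note q = qab[OF \<eta>(1)[of "fst y"], where v="ell (wf y) \<sigma>"]
    show "fst (snd (g y)) < snd (snd (g y))" unfolding g_def using q(3) q(5) by simp
    show "snd (snd (g y)) \<le> ell (fst (g y)) \<sigma>" unfolding g_def using q(6) by simp
    show "ell (fst (g y)) \<sigma> - \<eta> (fst y) < fst (snd (g y))" unfolding g_def using q(2) by simp
  qed
  show ?thesis
  proof (intro exI[of _ L] conjI)
    show "set L \<subseteq> Yset D \<times> (\<rat> \<times> \<rat>)"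
    proof
      fix z assume "z \<in> set L"
      then obtain y where y: "y \<in> set xs" "z = g y" unfolding L_def by auto
      obtain x c b where yy: "y = (x, c, b)" by (cases y) auto
      have "c \<in> J" using y(1) xs yy by auto
      then have "wf y \<in> Yset D" unfolding Yset_def wf_def yy using dd(1)[of x]
        by (intro image_eqI[of _ _ "(c, dd x, b)"]) auto
      then show "z \<in> Yset D \<times> (\<rat> \<times> \<rat>)" unfolding y(2) g_def using qab[OF \<eta>(1)] by auto
    qed
    show "\<forall>x\<in>set L. fst (snd x) < snd (snd x)" unfolding L_def using g_props(1) by auto
    show "Hyp (map (\<lambda>x. (fst x, snd (snd x))) L) \<sigma>" unfolding L_def Hyp_map using g_props(2) by auto
    show "\<forall>\<tau>\<in>P. (\<forall>x\<in>set L. fst (snd x) < ell (fst x) \<tau>) \<longrightarrow> \<tau> \<in> N'"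
    proof (intro ballI impI)
      fix \<tau> assume \<tau>: "\<tau> \<in> P" and V: "\<forall>x\<in>set L. fst (snd x) < ell (fst x) \<tau>"
      have \<tau>D: "\<tau> \<in> Dl" using \<tau> P_sub by blast
      have Vg: "ell (wf y) \<sigma> - \<eta> (fst y) < ell (wf y) \<tau>" if "y \<in> set xs" for y
      proof -
        have "g y \<in> set L" unfolding L_def using that by simp
        then have "fst (snd (g y)) < ell (fst (g y)) \<tau>" using V by blast
        then show ?thesis using g_props(3)[of y] unfolding g_def by simp
      qed
      have "\<tau> x \<in> U' x" for x
      proof (cases "x \<in> I")
        case False then show ?thesis unfolding I_def by auto
      next
        case True
        have bnd: "\<bar>re (c * (\<tau> (dd x) - \<sigma> (dd x)))\<bar> \<le> \<eta> x" if c: "c \<in> J" for c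
        proof -
          have "(x, c, True) \<in> set xs" "(x, c, False) \<in> set xs" using xs True c by auto
          from Vg[OF this(1)] Vg[OF this(2)]
          have "ell (smul c (dd x)) \<sigma> - \<eta> x < ell (smul c (dd x)) \<tau>"
               "ell (- smul c (dd x)) \<sigma> - \<eta> x < ell (- smul c (dd x)) \<tau>"
            unfolding wf_def by simp_all
          then have "\<bar>ell (smul c (dd x)) \<tau> - ell (smul c (dd x)) \<sigma>\<bar> \<le> \<eta> x"
            using ell_neg[OF \<tau>D] ell_neg[OF \<sigma>D] by simp
          then show ?thesis
            unfolding ell_smul_re[OF \<tau>D] ell_smul_re[OF \<sigma>D] by (simp add: right_diff_distrib re_diff)
        qed
        have "norm (\<tau> (dd x) - \<sigma> (dd x)) \<le> (\<Sum>c\<in>J. \<bar>re (c * (\<tau> (dd x) - \<sigma> (dd x)))\<bar>)" by (rule J_norm)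
        also have "\<dots> \<le> (\<Sum>c\<in>J. \<eta> x)" using bnd by (intro sum_mono) auto
        also have "\<dots> = real (card J) * \<eta> x" by simp
        also have "\<dots> \<le> r x / 4" by (rule \<eta>(2))
        finally have m: "norm (\<tau> (dd x) - \<sigma> (dd x)) \<le> r x / 4" .
        have t1: "norm (\<tau> x - \<tau> (dd x)) \<le> r x / 4" using dd(2) \<tau> by blast
        have t2: "norm (\<sigma> x - \<sigma> (dd x)) \<le> r x / 4" using dd(2) \<sigma> by blast
        have "norm (\<sigma> x - \<tau> x) \<le> norm (\<sigma> x - \<sigma> (dd x)) + norm (\<tau> (dd x) - \<sigma> (dd x)) + norm (\<tau> x - \<tau> (dd x))"
        proof -
          have e: "\<sigma> x - \<tau> x = ((\<sigma> x - \<sigma> (dd x)) + - (\<tau> (dd x) - \<sigma> (dd x))) + (\<tau> (dd x) - \<tau> x)"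
            by (simp add: algebra_simps)
          have "norm (\<sigma> x - \<tau> x) \<le> norm ((\<sigma> x - \<sigma> (dd x)) + - (\<tau> (dd x) - \<sigma> (dd x))) + norm (\<tau> (dd x) - \<tau> x)"
            unfolding e by (rule norm_triangle_ineq)
          also have "\<dots> \<le> norm (\<sigma> x - \<sigma> (dd x)) + norm (- (\<tau> (dd x) - \<sigma> (dd x))) + norm (\<tau> (dd x) - \<tau> x)"
            by (rule add_right_mono[OF norm_triangle_ineq])
          finally show ?thesis by (simp only: norm_minus_cancel norm_minus_commute[of "\<tau> (dd x)" "\<tau> x"])
        qed
        also have "\<dots> < r x" using t1 t2 m r(1)[of x] by simp
        finally have "\<tau> x \<in> ball (\<sigma> x) (r x)" by (simp add: dist_norm)
        then show ?thesis using r(2) by blast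
      qed
      then have "\<tau> \<in> PiE UNIV U'" by (simp add: PiE_iff)
      then show "\<tau> \<in> N'" using U'(4) by blast
    qed
  qed
qed


lemma open_V: "open {\<tau>. \<forall>x\<in>set L. fst (snd x) < ell (fst x) \<tau>}"
proof -
  have "{\<tau>. \<forall>x\<in>set L. fst (snd x) < ell (fst x) \<tau>} = (\<Inter>x\<in>set L. {\<tau>. fst (snd x) < ell (fst x) \<tau>})" by auto
  then show ?thesis using open_ell_gt by (simp add: open_INT)
qed

lemma DU_in_W:
  assumes F: "F \<in> DU smul T U" and L: "\<forall>x\<in>set L. fst (snd x) < snd (snd x)"
  shows "F \<in> Wset L"
proof -
  have FC: "F \<in> CU smul T U" and Fcl: "F = weakstar smul T closure_of (extreme_points F)"
    using F unfolding DU_def by auto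
  note Fp = CU_props[OF FC]
  have FD: "F \<subseteq> Dl" using Fp(2) P_sub by (rule order_trans)
  let ?Min = "map (\<lambda>x. (fst x, snd (snd x))) L"
  show ?thesis
  proof (cases "\<forall>\<sigma>\<in>F. \<not> Hyp ?Min \<sigma>")
    case True
    then have "Sep F ?Min" using sep_lemma[OF Fp(5) FD Fp(3)] by blast
    then show ?thesis unfolding Wset_def by blast
  next
    case False
    then obtain \<sigma>0 where \<sigma>0: "\<sigma>0 \<in> F" "Hyp ?Min \<sigma>0" by blast
    let ?V = "{\<tau>. \<forall>x\<in>set L. fst (snd x) < ell (fst x) \<tau>}"
    have "\<sigma>0 \<in> ?V"
    proof (simp, intro ballI)
      fix x assume x: "x \<in> set L"
      have "snd (snd x) \<le> ell (fst x) \<sigma>0" using \<sigma>0(2) x unfolding Hyp_map by auto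
      then show "fst (snd x) < ell (fst x) \<sigma>0" using L x by force
    qed
    have \<sigma>0D: "\<sigma>0 \<in> Dl" using FD \<sigma>0(1) by (rule subsetD)
    have "\<sigma>0 \<in> weakstar smul T closure_of (extreme_points F)" using \<sigma>0(1) Fcl by simp
    then have cl: "\<forall>T'. \<sigma>0 \<in> T' \<and> openin (weakstar smul T) T' \<longrightarrow> (\<exists>y. y \<in> extreme_points F \<and> y \<in> T')"
      unfolding in_closure_of by (rule conjunct2)
    have op: "openin (weakstar smul T) (Dl \<inter> ?V)" unfolding weakstar_eq using open_V by (auto simp: openin_open)
    have "\<sigma>0 \<in> Dl \<inter> ?V" using \<sigma>0D \<open>\<sigma>0 \<in> ?V\<close> by simp
    then have "\<exists>y. y \<in> extreme_points F \<and> y \<in> Dl \<inter> ?V" by (rule cl[THEN spec, THEN mp, OF conjI, OF _ op])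
    then obtain e where e: "e \<in> extreme_points F" "e \<in> ?V" by blast
    have eF: "e \<in> F" using e(1) unfolding extreme_points_def by simp
    let ?Ks = "map (\<lambda>x. (fst x, fst (snd x))) L"
    have "\<forall>x\<in>set ?Ks. snd x < ell (fst x) e" using e(2) by auto
    from choquet[OF Fp(5) FD Fp(3) e(1) this] obtain A c where
      Ac: "c < ell A e" "\<forall>x\<in>set ?Ks. Sep F [(A, c), (- fst x, - snd x)]" by blast
    have "\<forall>x\<in>set L. Sep F [(A, c), (- fst x, - fst (snd x))]" using Ac(2) by auto
    moreover have "\<exists>\<tau>\<in>F. c < ell A \<tau>" using eF Ac(1) by blast
    ultimately show ?thesis unfolding Wset_def by blast
  qed
qed

lemma W_in_DU:
  assumes D: "T closure_of D = topspace T" and FC: "F \<in> CU smul T U"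
    and W: "\<forall>L. set L \<subseteq> Yset D \<times> (\<rat> \<times> \<rat>) \<and> (\<forall>x\<in>set L. fst (snd x) < snd (snd x)) \<longrightarrow> F \<in> Wset L"
  shows "F \<in> DU smul T U"
proof -
  note Fp = CU_props[OF FC]
  have FD: "F \<subseteq> Dl" using Fp(2) P_sub by (rule order_trans)
  have extF: "extreme_points F \<subseteq> F" unfolding extreme_points_def by auto
  have Fclo: "closedin (weakstar smul T) F" using FC unfolding CU_def by simp
  have "weakstar smul T closure_of (extreme_points F) \<subseteq> F" by (rule closure_of_minimal[OF extF Fclo])
  moreover have "F \<subseteq> weakstar smul T closure_of (extreme_points F)"
  proof
    fix \<sigma> assume \<sigma>F: "\<sigma> \<in> F"
    have \<sigma>D: "\<sigma> \<in> Dl" using FD \<sigma>F by (rule subsetD)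
    have \<sigma>P: "\<sigma> \<in> P" using Fp(2) \<sigma>F by (rule subsetD)
    show "\<sigma> \<in> weakstar smul T closure_of (extreme_points F)"
      unfolding in_closure_of
    proof (intro conjI allI impI)
      show "\<sigma> \<in> topspace (weakstar smul T)" unfolding weakstar_eq using \<sigma>D by simp
      fix N assume N: "\<sigma> \<in> N \<and> openin (weakstar smul T) N"
      then obtain N' where N': "open N'" "N = Dl \<inter> N'" unfolding weakstar_eq openin_open by blast
      have "\<sigma> \<in> N'" using N N'(2) by blast
      from approx[OF D \<sigma>P N'(1) this] obtain L where
        L: "set L \<subseteq> Yset D \<times> (\<rat> \<times> \<rat>)" "\<forall>x\<in>set L. fst (snd x) < snd (snd x)"
           "Hyp (map (\<lambda>x. (fst x, snd (snd x))) L) \<sigma>"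
           "\<forall>\<tau>\<in>P. (\<forall>x\<in>set L. fst (snd x) < ell (fst x) \<tau>) \<longrightarrow> \<tau> \<in> N'" by blast
      have "F \<in> Wset L" using W L(1,2) by blast
      then consider (a) "Sep F (map (\<lambda>x. (fst x, snd (snd x))) L)"
        | (b) A c where "\<exists>\<tau>\<in>F. c < ell A \<tau>" "\<forall>x\<in>set L. Sep F [(A, c), (- fst x, - fst (snd x))]"
        unfolding Wset_def by blast
      then show "\<exists>y. y \<in> extreme_points F \<and> y \<in> N"
      proof cases
        case a
        then obtain B d \<epsilon> where S: "\<epsilon> > 0" "\<forall>\<tau>\<in>F. ell B \<tau> \<le> d - \<epsilon>"
          "\<forall>\<tau>\<in>Dl. Hyp (map (\<lambda>x. (fst x, snd (snd x))) L) \<tau> \<longrightarrow> d \<le> ell B \<tau>"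
          unfolding Sep_def by (elim exE conjE) (rule that; assumption)
        have "ell B \<sigma> \<le> d - \<epsilon>" using S(2) \<sigma>F by (rule bspec)
        moreover have "d \<le> ell B \<sigma>" using S(3) \<sigma>D L(3) by blast
        ultimately show ?thesis using S(1) by simp
      next
        case b
        obtain \<tau>0 where \<tau>0: "\<tau>0 \<in> F" "c < ell A \<tau>0" using b(1) by blast
        obtain m where m: "{\<sigma>\<in>F. ell A \<sigma> = m} \<noteq> {}" "closed {\<sigma>\<in>F. ell A \<sigma> = m}"
          "face {\<sigma>\<in>F. ell A \<sigma> = m} F" "\<forall>\<sigma>\<in>F. ell A \<sigma> \<le> m"
          using argmax_face[OF Fp(5) Fp(1)] by blast
        obtain e where e: "e \<in> {\<sigma>\<in>F. ell A \<sigma> = m}" "e \<in> extreme_points F"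
          using exists_extreme[OF Fp(5) FD m(2) m(1) m(3)] by blast
        have eF: "e \<in> F" and eA: "ell A e = m" using e(1) by simp_all
        have eD: "e \<in> Dl" using FD eF by (rule subsetD)
        have eP: "e \<in> P" using Fp(2) eF by (rule subsetD)
        have "c < ell A e" using \<tau>0 m(4) eA by force
        have eV: "\<forall>x\<in>set L. fst (snd x) < ell (fst x) e"
        proof
          fix x assume x: "x \<in> set L"
          show "fst (snd x) < ell (fst x) e"
          proof (rule ccontr)
            assume "\<not> fst (snd x) < ell (fst x) e"
            then have "- fst (snd x) \<le> ell (- fst x) e" using ell_neg[OF eD] by simp
            then have H: "Hyp [(A, c), (- fst x, - fst (snd x))] e" unfolding Hyp_two using \<open>c < ell A e\<close> by simp
            have "Sep F [(A, c), (- fst x, - fst (snd x))]" using b(2) x by (rule bspec)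
            then obtain B d \<epsilon> where S: "\<epsilon> > 0" "\<forall>\<tau>\<in>F. ell B \<tau> \<le> d - \<epsilon>"
              "\<forall>\<tau>\<in>Dl. Hyp [(A, c), (- fst x, - fst (snd x))] \<tau> \<longrightarrow> d \<le> ell B \<tau>"
              unfolding Sep_def by (elim exE conjE) (rule that; assumption)
            have "ell B e \<le> d - \<epsilon>" using S(2) eF by (rule bspec)
            moreover have "d \<le> ell B e" using S(3) eD H by blast
            ultimately show False using S(1) by simp
          qed
        qed
        have "e \<in> N'" using L(4) eP eV by blast
        then have "e \<in> N" using N'(2) eD by blast
        then show ?thesis using e(2) by blast
      qed
    qed
  qed
  ultimately have "F = weakstar smul T closure_of (extreme_points F)" by (rule antisym[rotated])
  then show ?thesis unfolding DU_def using FC by simp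
qed

theorem main: "gdelta_in (subtopology weakstar_hausdorff_hypertopology (CU smul T U)) (DU smul T U)"
proof -
  obtain D where D: "countable D" "T closure_of D = topspace T"
    using sepT unfolding separable_space_def by blast
  define Fam where "Fam = {L :: ('a \<times> real \<times> real) list. set L \<subseteq> Yset D \<times> (\<rat> \<times> \<rat>) \<and> (\<forall>x\<in>set L. fst (snd x) < snd (snd x))}"
  have cY: "countable (Yset D)" unfolding Yset_def using J_fin D(1)
    by (intro countable_image countable_SIGMA) (auto intro: countable_finite)
  have cQ: "countable (\<rat> :: real set)" by (rule countable_rat)
  have "countable (Yset D \<times> ((\<rat> :: real set) \<times> (\<rat> :: real set)))" by (intro countable_SIGMA cY cQ)
  then have "countable (lists (Yset D \<times> ((\<rat> :: real set) \<times> (\<rat> :: real set))))" by (rule countable_lists)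
  moreover have "Fam \<subseteq> lists (Yset D \<times> (\<rat> \<times> \<rat>))" unfolding Fam_def lists_eq_set by auto
  ultimately have cFam: "countable Fam" by (rule countable_subset[rotated])
  define \<U> where "\<U> = (\<lambda>L. Wset L \<inter> CU smul T U) ` Fam"
  have c\<U>: "countable \<U>" unfolding \<U>_def using cFam by simp
  have o\<U>: "\<U> \<subseteq> Collect (openin (subtopology weakstar_hausdorff_hypertopology (CU smul T U)))"
  proof
    fix u assume "u \<in> \<U>"
    then obtain L where u: "u = Wset L \<inter> CU smul T U" unfolding \<U>_def by blast
    have "openin weakstar_hausdorff_hypertopology (Wset L)" by (rule Wset_open)
    then show "u \<in> Collect (openin (subtopology weakstar_hausdorff_hypertopology (CU smul T U)))"
      unfolding u mem_Collect_eq openin_subtopology by blast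
  qed
  have ts: "topspace (subtopology weakstar_hausdorff_hypertopology (CU smul T U)) = CU smul T U"
    by (simp add: topspace_hyper)
  have eq: "CU smul T U \<inter> \<Inter>\<U> = DU smul T U"
  proof
    show "CU smul T U \<inter> \<Inter>\<U> \<subseteq> DU smul T U"
    proof
      fix F assume F: "F \<in> CU smul T U \<inter> \<Inter>\<U>"
      have "\<forall>L. set L \<subseteq> Yset D \<times> (\<rat> \<times> \<rat>) \<and> (\<forall>x\<in>set L. fst (snd x) < snd (snd x)) \<longrightarrow> F \<in> Wset L"
      proof (intro allI impI)
        fix L :: "('a \<times> real \<times> real) list" assume "set L \<subseteq> Yset D \<times> (\<rat> \<times> \<rat>) \<and> (\<forall>x\<in>set L. fst (snd x) < snd (snd x))"
        then have "L \<in> Fam" unfolding Fam_def by simp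
        then have "Wset L \<inter> CU smul T U \<in> \<U>" unfolding \<U>_def by (rule imageI)
        then show "F \<in> Wset L" using F by blast
      qed
      then show "F \<in> DU smul T U" using W_in_DU[OF D(2)] F by blast
    qed
    show "DU smul T U \<subseteq> CU smul T U \<inter> \<Inter>\<U>"
    proof
      fix F assume F: "F \<in> DU smul T U"
      then have FC: "F \<in> CU smul T U" unfolding DU_def by simp
      have "F \<in> Wset L" if "L \<in> Fam" for L using DU_in_W[OF F] that unfolding Fam_def by simp
      then have "F \<in> \<Inter>\<U>" unfolding \<U>_def using FC by blast
      then show "F \<in> CU smul T U \<inter> \<Inter>\<U>" using FC by blast
    qed
  qed
  show ?thesis unfolding gdelta_in_def relative_to_def intersection_of_def
    using c\<U> o\<U> eq ts by blast
qed

end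

theorem theorem4p9:
  fixes smulR :: "real \<Rightarrow> 'a::ab_group_add \<Rightarrow> 'a" and TR :: "'a topology"
    and smulC :: "complex \<Rightarrow> 'b::ab_group_add \<Rightarrow> 'b" and TC :: "'b topology"
  shows "(tvs smulR TR \<and> separable_space TR \<and> dual_separates_points smulR TR \<and>
            gateaux_differentiability_space smulR TR \<longrightarrow>
          (\<forall>U. zero_nbhd TR U \<longrightarrow>
             gdelta_in (subtopology weakstar_hausdorff_hypertopology (CU smulR TR U))
                       (DU smulR TR U))) \<and>
         (tvs smulC TC \<and> separable_space TC \<and> dual_separates_points smulC TC \<and>
            gateaux_differentiability_space smulC TC \<longrightarrow>
          (\<forall>U. zero_nbhd TC U \<longrightarrow>
             gdelta_in (subtopology weakstar_hausdorff_hypertopology (CU smulC TC U))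
                       (DU smulC TC U)))"
proof (rule conjI)
  show "tvs smulR TR \<and> separable_space TR \<and> dual_separates_points smulR TR \<and>
            gateaux_differentiability_space smulR TR \<longrightarrow>
          (\<forall>U. zero_nbhd TR U \<longrightarrow>
             gdelta_in (subtopology weakstar_hausdorff_hypertopology (CU smulR TR U))
                       (DU smulR TR U))"
  proof (intro impI allI)
    fix U assume A: "tvs smulR TR \<and> separable_space TR \<and> dual_separates_points smulR TR \<and>
            gateaux_differentiability_space smulR TR" and U: "zero_nbhd TR U"
    have "wsetting smulR TR U (\<lambda>x::real. x) {1::real}"
      unfolding wsetting_def using A U by (simp add: bounded_linear_ident)
    then interpret R: wsetting smulR TR U "\<lambda>x::real. x" "{1::real}" .
    show "gdelta_in (subtopology weakstar_hausdorff_hypertopology (CU smulR TR U)) (DU smulR TR U)"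
      by (rule R.main)
  qed
  show "tvs smulC TC \<and> separable_space TC \<and> dual_separates_points smulC TC \<and>
            gateaux_differentiability_space smulC TC \<longrightarrow>
          (\<forall>U. zero_nbhd TC U \<longrightarrow>
             gdelta_in (subtopology weakstar_hausdorff_hypertopology (CU smulC TC U))
                       (DU smulC TC U))"
  proof (intro impI allI)
    fix U assume A: "tvs smulC TC \<and> separable_space TC \<and> dual_separates_points smulC TC \<and>
            gateaux_differentiability_space smulC TC" and U: "zero_nbhd TC U"
    have sumJ: "norm z \<le> (\<Sum>c\<in>{1, - \<i>}. \<bar>Re (c * z)\<bar>)" for z
    proof -
      have "(1::complex) \<noteq> - \<i>" by (simp add: complex_eq_iff)
      then have "(\<Sum>c\<in>{1, - \<i>}. \<bar>Re (c * z)\<bar>) = \<bar>Re z\<bar> + \<bar>Im z\<bar>" by simp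
      then show ?thesis using cmod_le[of z] by simp
    qed
    have "wsetting smulC TC U Re {1, - \<i>}"
      unfolding wsetting_def using A U sumJ by (simp add: bounded_linear_Re abs_Re_le_cmod)
    then interpret C: wsetting smulC TC U Re "{1, - \<i>}" .
    show "gdelta_in (subtopology weakstar_hausdorff_hypertopology (CU smulC TC U)) (DU smulC TC U)"
      by (rule C.main)
  qed
qed

end
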